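(* For $k\ge0$ let $(\mathfrak{S}Sym)^k$ be the span of $\{\mathcal{M}_u:u\in\mathfrak{S}^k\}$, where $\mathfrak{S}^0=\mathfrak{S}_0$ and, for $k\ge1$, $\mathfrak{S}^k=\bigsqcup_{n\ge1}\{u\in\mathfrak{S}_n: \#\mathrm{GDes}(u)=k-1\}$. Then $\mathfrak{S}Sym=\bigoplus_{k\ge0}(\mathfrak{S}Sym)^k$ is a coalgebra grading, i.e. $\Delta((\mathfrak{S}Sym)^k)\subseteq\bigoplus_{i=0}^k(\mathfrak{S}Sym)^i\otimes(\mathfrak{S}Sym)^{k-i}$, and with this grading $\mathfrak{S}Sym$ is isomorphic as a graded coalgebra to the cofree graded coalgebra $Q(V)$ on $V=(\mathfrak{S}Sym)^1$.
   Context: Permutations in one-line notation, product is composition; $\mathfrak{S}_0$ has one element. $\mathrm{GDes}(u)=\{p\in[n-1]:u_i>u_j\text{ for all }i\le p<j\}$. $\mathrm{st}(a_1,\ldots,a_m)\in\mathfrak{S}_m$ is the permutation with the same relative order as the distinct integers $a_i$; $u\times v\in\mathfrak{S}_{p+q}$ for $u\in\mathfrak{S}_p,v\in\mathfrak{S}_q$ has $(u\times v)(i)=u_i$ ($i\le p$), $(u\times v)(p+j)=p+v_j$. $\mathfrak{S}Sym$ is the Hopf algebra over $\mathbb{Q}$ with basis $\{\mathcal{F}_u:u\in\mathfrak{S}_n,n\ge0\}$, product $\mathcal{F}_u\cdot\mathcal{F}_v=\sum_\zeta\mathcal{F}_{(u\times v)\zeta^{-1}}$ over $\zeta\in\mathfrak{S}_{p+q}$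 increasing on $[1,p]$ and on $[p+1,p+q]$, coproduct $\Delta(\mathcal{F}_u)=\sum_{p=0}^n\mathcal{F}_{\mathrm{st}(u_1..u_p)}\otimes\mathcal{F}_{\mathrm{st}(u_{p+1}..u_n)}$. Weak order: $u\le v$ iff $\mathrm{Inv}(u)\subseteq\mathrm{Inv}(v)$, $\mathrm{Inv}(u)=\{(i,j):i<j,u_i>u_j\}$; Möbius function $\mu$. $\mathcal{M}_u=\sum_{v\ge u}\mu(u,v)\mathcal{F}_v$. For a vector space $V$, $Q(V)=\bigoplus_{k\ge0}V^{\otimes k}$ graded by $k$, with deconcatenation coproduct $\Delta(v_1\otimes\cdots\otimes v_k)=\sum_{i=0}^k(v_1\otimes\cdots\otimes v_i)\otimes(v_{i+1}\otimes\cdots\otimes v_k)$ and counit vanishing on $V^{\otimes k}$, $k\ge1$. *)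

theory Defs
  imports Complex_Main "HOL-Library.Function_Algebras"
begin

text \<open>A permutation in S_n is represented by its one-line notation, a list
  [u_1, ..., u_n] of naturals that is a rearrangement of 1..n.  The empty list
  is the unique element of S_0.  List indices are 0-based, so u_i is u ! (i - 1).\<close>

definition is_perm :: "nat list \<Rightarrow> bool" where
  "is_perm u \<longleftrightarrow> distinct u \<and> set u = {1..length u}"

definition Inv :: "nat list \<Rightarrow> (nat \<times> nat) set" where
  "Inv u = {(i, j). 1 \<le> i \<and> i < j \<and> j \<le> length u \<and> u ! (i - 1) > u ! (j - 1)}"

definition weak_le :: "nat list \<Rightarrow> nat list \<Rightarrow> bool" where
  "weak_le u v \<longleftrightarrow> is_perm u \<and> is_perm v \<and> length u = length v \<and> Inv u \<subseteq> Inv v"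

definition weak_lt :: "nat list \<Rightarrow> nat list \<Rightarrow> bool" where
  "weak_lt u v \<longleftrightarrow> weak_le u v \<and> u \<noteq> v"

text \<open>The recursion is run with a fuel parameter; the fuel fact n + 1 used in
  mobius exceeds the length of every strict chain in S_n, so it never runs out.\<close>
fun mob_aux :: "nat \<Rightarrow> nat list \<Rightarrow> nat list \<Rightarrow> int" where
  "mob_aux 0 u v = 0"
| "mob_aux (Suc m) u v =
     (if u = v \<and> is_perm u then 1
      else if weak_lt u v then - (\<Sum>w\<in>{w. weak_le u w \<and> weak_lt w v}. mob_aux m u w)
      else 0)"

definition mobius :: "nat list \<Rightarrow> nat list \<Rightarrow> int" where
  "mobius u v = mob_aux (fact (length v) + 1) u v"

definition GDes :: "nat list \<Rightarrow> nat set" where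
  "GDes u = {p. 1 \<le> p \<and> p \<le> length u - 1 \<and>
     (\<forall>i j. 1 \<le> i \<and> i \<le> p \<and> p < j \<and> j \<le> length u \<longrightarrow> u ! (i - 1) > u ! (j - 1))}"

definition st :: "nat list \<Rightarrow> nat list" where
  "st a = map (\<lambda>x. card {y \<in> set a. y \<le> x}) a"

text \<open>Elements of SSym are finitely supported functions from permutations to Q:
  f stands for sum_u f(u) F_u.  Elements of SSym (x) SSym are finitely
  supported functions on pairs of permutations (the basis F_u (x) F_v).\<close>

definition fsupp :: "('a \<Rightarrow> rat) \<Rightarrow> 'a set" where
  "fsupp f = {x. f x \<noteq> 0}"

definition SSym :: "(nat list \<Rightarrow> rat) set" where
  "SSym = {f. finite (fsupp f) \<and> (\<forall>u \<in> fsupp f. is_perm u)}"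

definition scal :: "rat \<Rightarrow> ('a \<Rightarrow> rat) \<Rightarrow> ('a \<Rightarrow> rat)" where
  "scal c f = (\<lambda>x. c * f x)"

definition lspan :: "('a \<Rightarrow> rat) set \<Rightarrow> ('a \<Rightarrow> rat) set" where
  "lspan S = {x. \<exists>T c. finite T \<and> T \<subseteq> S \<and> x = (\<Sum>v\<in>T. scal (c v) v)}"

definition tensor :: "('a \<Rightarrow> rat) \<Rightarrow> ('b \<Rightarrow> rat) \<Rightarrow> ('a \<times> 'b \<Rightarrow> rat)" where
  "tensor f g = (\<lambda>(x, y). f x * g y)"

definition tensor_sp :: "('a \<Rightarrow> rat) set \<Rightarrow> ('b \<Rightarrow> rat) set \<Rightarrow> ('a \<times> 'b \<Rightarrow> rat) set" where
  "tensor_sp A B = lspan {tensor a b | a b. a \<in> A \<and> b \<in> B}"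

definition FF :: "nat list \<Rightarrow> (nat list \<Rightarrow> rat)" where
  "FF u = (\<lambda>v. if v = u then 1 else 0)"

definition DeltaF :: "nat list \<Rightarrow> (nat list \<times> nat list \<Rightarrow> rat)" where
  "DeltaF u = (\<Sum>p\<in>{0..length u}. tensor (FF (st (take p u))) (FF (st (drop p u))))"

definition Delta :: "(nat list \<Rightarrow> rat) \<Rightarrow> (nat list \<times> nat list \<Rightarrow> rat)" where
  "Delta f = (\<Sum>u\<in>fsupp f. scal (f u) (DeltaF u))"

definition counit :: "(nat list \<Rightarrow> rat) \<Rightarrow> rat" where
  "counit f = f []"

definition MM :: "nat list \<Rightarrow> (nat list \<Rightarrow> rat)" where
  "MM u = (\<Sum>v\<in>{v. weak_le u v}. scal (of_int (mobius u v)) (FF v))"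

definition Sk :: "nat \<Rightarrow> nat list set" where
  "Sk k = (if k = 0 then {[]}
           else {u. is_perm u \<and> 1 \<le> length u \<and> card (GDes u) = k - 1})"

definition SSymk :: "nat \<Rightarrow> (nat list \<Rightarrow> rat) set" where
  "SSymk k = lspan (MM ` Sk k)"

text \<open>Q(V), for a subspace V of SSym, is realised inside the tensor algebra
  T(SSym) = (+)_k SSym^{(x)k}, whose elements are finitely supported functions
  on words of permutations (basis F_{w_1} (x) ... (x) F_{w_k}).\<close>

definition tpow :: "(nat list \<Rightarrow> rat) list \<Rightarrow> (nat list list \<Rightarrow> rat)" where
  "tpow vs = (\<lambda>w. if length w = length vs then (\<Prod>i<length vs. (vs ! i) (w ! i)) else 0)"

definition Vpow :: "(nat list \<Rightarrow> rat) set \<Rightarrow> nat \<Rightarrow> (nat list list \<Rightarrow> rat) set" where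
  "Vpow V k = lspan {tpow vs | vs. length vs = k \<and> set vs \<subseteq> V}"

definition QV :: "(nat list \<Rightarrow> rat) set \<Rightarrow> (nat list list \<Rightarrow> rat) set" where
  "QV V = lspan (\<Union>k. Vpow V k)"

text \<open>Deconcatenation coproduct: Delta(w) = sum_i w_1..w_i (x) w_{i+1}..w_k on
  basis words, i.e. the coefficient of (w1, w2) in Delta(g) is g(w1 @ w2).
  Counit: coefficient of the empty word.\<close>
definition DeltaQ :: "(nat list list \<Rightarrow> rat) \<Rightarrow> (nat list list \<times> nat list list \<Rightarrow> rat)" where
  "DeltaQ g = (\<lambda>(w1, w2). g (w1 @ w2))"

definition counitQ :: "(nat list list \<Rightarrow> rat) \<Rightarrow> rat" where
  "counitQ g = g []"

definition tensor_map :: "((nat list \<Rightarrow> rat) \<Rightarrow> (nat list list \<Rightarrow> rat))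
    \<Rightarrow> (nat list \<times> nat list \<Rightarrow> rat) \<Rightarrow> (nat list list \<times> nat list list \<Rightarrow> rat)" where
  "tensor_map phi t = (\<Sum>(a, b)\<in>fsupp t. scal (t (a, b)) (tensor (phi (FF a)) (phi (FF b))))"

end

theory Submission
  imports Defs
begin



lemma sum_fun_app: "(\<Sum>i\<in>I. f i) x = (\<Sum>i\<in>I. f i x)"
  by (induct I rule: infinite_finite_induct) auto

definition over :: "nat list \<Rightarrow> nat list \<Rightarrow> nat list" where
  "over a b = map (\<lambda>x. x + length b) a @ b"

lemma length_over[simp]: "length (over a b) = length a + length b"
  by (simp add: over_def)

lemma over_nth1: "i < length a \<Longrightarrow> over a b ! i = a ! i + length b"
  by (simp add: over_def nth_append)

lemma over_nth2: "length a \<le> i \<Longrightarrow> over a b ! i = b ! (i - length a)"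
  by (simp add: over_def nth_append)

lemma over_Nil1[simp]: "over [] b = b" by (simp add: over_def)
lemma over_Nil2[simp]: "over a [] = a" by (simp add: over_def)

lemma over_assoc: "over (over a b) c = over a (over b c)"
  by (simp add: over_def add.assoc)

lemma perm_nth: "is_perm u \<Longrightarrow> i < length u \<Longrightarrow> 1 \<le> u ! i \<and> u ! i \<le> length u"
  unfolding is_perm_def using nth_mem by fastforce

lemma perm_Nil[simp]: "is_perm []" by (simp add: is_perm_def)

lemma perm_over:
  assumes "is_perm a" "is_perm b" shows "is_perm (over a b)"
proof -
  have da: "distinct a" and sa: "set a = {1..length a}" and db: "distinct b" and sb: "set b = {1..length b}"
    using assms by (auto simp: is_perm_def)
  have "distinct (map (\<lambda>x. x + length b) a)" using da by (simp add: distinct_map inj_on_def)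
  moreover have "set (map (\<lambda>x. x + length b) a) \<inter> set b = {}" using sa sb by auto
  moreover have "set (map (\<lambda>x. x + length b) a) \<union> set b = {1..length a + length b}"
  proof -
    have "set (map (\<lambda>x. x + length b) a) = {length b + 1..length b + length a}"
      using sa by (simp add: add.commute)
    then show ?thesis using sb by auto
  qed
  ultimately show ?thesis using db by (simp add: is_perm_def over_def)
qed

lemma perm_length_finite: "finite {u. is_perm u \<and> length u = n}"
proof -
  have "{u. is_perm u \<and> length u = n} \<subseteq> {xs. set xs \<subseteq> {1..n} \<and> length xs = n}"
    unfolding is_perm_def by blast
  moreover have "finite {xs. set xs \<subseteq> {1..n} \<and> length xs = n}"
    by (rule finite_lists_length_eq) simp
  ultimately show ?thesis by (rule finite_subset)
qed

section \<open>Patterns and standardization\<close>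

lemma perm_pos:
  assumes "is_perm u" "i < length u"
  shows "card {j. j < length u \<and> u ! j \<le> u ! i} = u ! i"
proof -
  have d: "distinct u" and s: "set u = {1..length u}" using assms by (auto simp: is_perm_def)
  have "(\<lambda>j. u ! j) ` {j. j < length u \<and> u ! j \<le> u ! i} = {1..u ! i}"
  proof
    show "(\<lambda>j. u ! j) ` {j. j < length u \<and> u ! j \<le> u ! i} \<subseteq> {1..u ! i}"
      using perm_nth[OF assms(1)] by auto
  next
    show "{1..u ! i} \<subseteq> (\<lambda>j. u ! j) ` {j. j < length u \<and> u ! j \<le> u ! i}"
    proof
      fix y assume y: "y \<in> {1..u ! i}"
      then have "y \<in> set u" using s perm_nth[OF assms] by auto
      then obtain j where "j < length u" "u ! j = y" by (auto simp: in_set_conv_nth)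
      then show "y \<in> (\<lambda>j. u ! j) ` {j. j < length u \<and> u ! j \<le> u ! i}" using y by auto
    qed
  qed
  moreover have "inj_on (\<lambda>j. u ! j) {j. j < length u \<and> u ! j \<le> u ! i}"
    using d by (auto simp: inj_on_def nth_eq_iff_index_eq)
  ultimately show ?thesis by (metis card_image card_atLeastAtMost diff_Suc_1)
qed

lemma st_nth:
  assumes "distinct l" "i < length l"
  shows "st l ! i = card {j. j < length l \<and> l ! j \<le> l ! i}"
proof -
  have "{y \<in> set l. y \<le> l ! i} = (\<lambda>j. l ! j) ` {j. j < length l \<and> l ! j \<le> l ! i}"
    by (auto simp: in_set_conv_nth)
  moreover have "inj_on (\<lambda>j. l ! j) {j. j < length l \<and> l ! j \<le> l ! i}"
    using assms(1) by (auto simp: inj_on_def nth_eq_iff_index_eq)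
  ultimately show ?thesis using assms by (simp add: st_def card_image)
qed

lemma length_st[simp]: "length (st l) = length l" by (simp add: st_def)

lemma st_perm: "is_perm u \<Longrightarrow> st u = u"
  by (rule nth_equalityI) (auto simp: st_nth is_perm_def perm_pos)

lemma st_less:
  assumes "distinct l" "i < length l" "j < length l"
  shows "st l ! i < st l ! j \<longleftrightarrow> l ! i < l ! j"
proof
  assume a: "l ! i < l ! j"
  have s1: "{k. k < length l \<and> l ! k \<le> l ! i} \<subseteq> {k. k < length l \<and> l ! k \<le> l ! j}"
    using a by (auto intro: order_trans)
  have s2: "j \<in> {k. k < length l \<and> l ! k \<le> l ! j}" "j \<notin> {k. k < length l \<and> l ! k \<le> l ! i}"
    using a assms by auto
  have "{k. k < length l \<and> l ! k \<le> l ! i} \<subset> {k. k < length l \<and> l ! k \<le> l ! j}"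
    using s1 s2 by blast
  then have "card {k. k < length l \<and> l ! k \<le> l ! i} < card {k. k < length l \<and> l ! k \<le> l ! j}"
    by (rule psubset_card_mono[rotated]) simp
  then show "st l ! i < st l ! j" using assms by (simp only: st_nth)
next
  assume a: "st l ! i < st l ! j"
  show "l ! i < l ! j"
  proof (rule ccontr)
    assume "\<not> l ! i < l ! j"
    then have "{k. k < length l \<and> l ! k \<le> l ! j} \<subseteq> {k. k < length l \<and> l ! k \<le> l ! i}"
      by (auto intro: order_trans)
    then have "card {k. k < length l \<and> l ! k \<le> l ! j} \<le> card {k. k < length l \<and> l ! k \<le> l ! i}"
      by (rule card_mono[rotated]) simp
    then have "st l ! j \<le> st l ! i" using assms by (simp only: st_nth)
    then show False using a by simp
  qed
qed

lemma perm_st: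
  assumes "distinct l" shows "is_perm (st l)"
proof -
  have dst: "distinct (st l)"
  proof (subst distinct_conv_nth, intro allI impI)
    fix i j assume "i < length (st l)" "j < length (st l)" "i \<noteq> j"
    then have "l ! i \<noteq> l ! j" "i < length l" "j < length l" using assms by (auto simp: nth_eq_iff_index_eq)
    then show "st l ! i \<noteq> st l ! j" using st_less[OF assms] by (metis linorder_neqE order_less_irrefl)
  qed
  have sub: "set (st l) \<subseteq> {1..length l}"
  proof
    fix y assume "y \<in> set (st l)"
    then obtain i where i: "i < length l" "y = st l ! i" by (auto simp: in_set_conv_nth)
    have "i \<in> {j. j < length l \<and> l ! j \<le> l ! i}" using i by auto
    then have "1 \<le> card {j. j < length l \<and> l ! j \<le> l ! i}"
      by (metis (no_types, lifting) One_nat_def Suc_leI card_gt_0_iff empty_iff finite_nat_set_iff_bounded mem_Collect_eq)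
    moreover have "card {j. j < length l \<and> l ! j \<le> l ! i} \<le> card {..<length l}"
      by (rule card_mono) auto
    ultimately show "y \<in> {1..length l}" using i assms by (simp add: st_nth)
  qed
  have "card (set (st l)) = length l" using dst distinct_card by fastforce
  then have "set (st l) = {1..length l}" using sub by (simp add: card_subset_eq)
  then show ?thesis using dst by (simp add: is_perm_def)
qed

lemma st_shift:
  assumes "distinct l" "set l = {q+1..q+length l}"
  shows "st l = map (\<lambda>x. x - q) l"
proof (rule nth_equalityI)
  show "length (st l) = length (map (\<lambda>x. x - q) l)" by simp
  fix i assume i: "i < length (st l)"
  then have li: "l ! i \<in> {q+1..q+length l}" using assms(2) nth_mem by (metis length_st)
  have "{y \<in> set l. y \<le> l ! i} = {q+1..l ! i}" using assms(2) li by auto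
  then show "st l ! i = map (\<lambda>x. x - q) l ! i" using i li by (simp add: st_def)
qed

lemma st_map_add: "is_perm a \<Longrightarrow> st (map (\<lambda>x. x + q) a) = a"
proof -
  assume a: "is_perm a"
  have "distinct (map (\<lambda>x. x + q) a)" using a by (simp add: is_perm_def distinct_map inj_on_def)
  moreover have "set (map (\<lambda>x. x + q) a) = {q+1..q+length (map (\<lambda>x. x + q) a)}"
    using a by (simp add: is_perm_def add.commute)
  ultimately have "st (map (\<lambda>x. x + q) a) = map (\<lambda>x. x - q) (map (\<lambda>x. x + q) a)" by (rule st_shift)
  then show ?thesis by (simp add: comp_def)
qed

lemma st_take_over: "is_perm a \<Longrightarrow> st (take (length a) (over a b)) = a"
  by (simp add: over_def st_map_add)

lemma st_drop_over: "is_perm b \<Longrightarrow> st (drop (length a) (over a b)) = b"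
  by (simp add: over_def st_perm)




section \<open>Weak order\<close>

lemma Inv_mem: "(i, j) \<in> Inv u \<longleftrightarrow> 1 \<le> i \<and> i < j \<and> j \<le> length u \<and> u ! (i - 1) > u ! (j - 1)"
  by (simp add: Inv_def)

lemma Inv_sub_iff:
  "Inv u \<subseteq> Inv v \<longleftrightarrow> (\<forall>i j. i < j \<longrightarrow> j < length u \<longrightarrow> u ! j < u ! i \<longrightarrow>
      j < length v \<and> v ! j < v ! i)"
proof
  assume H: "Inv u \<subseteq> Inv v"
  show "\<forall>i j. i < j \<longrightarrow> j < length u \<longrightarrow> u ! j < u ! i \<longrightarrow> j < length v \<and> v ! j < v ! i"
  proof (intro allI impI)
    fix i j assume "i < j" "j < length u" "u ! j < u ! i"
    then have "(Suc i, Suc j) \<in> Inv u" by (simp add: Inv_mem)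
    then have "(Suc i, Suc j) \<in> Inv v" using H by blast
    then show "j < length v \<and> v ! j < v ! i" by (simp add: Inv_mem)
  qed
next
  assume H: "\<forall>i j. i < j \<longrightarrow> j < length u \<longrightarrow> u ! j < u ! i \<longrightarrow> j < length v \<and> v ! j < v ! i"
  show "Inv u \<subseteq> Inv v"
  proof
    fix x assume "x \<in> Inv u"
    then obtain i j where x: "x = (i, j)" and "1 \<le> i" "i < j" "j \<le> length u" "u ! (i - 1) > u ! (j - 1)"
      by (cases x) (auto simp: Inv_mem)
    then have "j - 1 < length v \<and> v ! (j - 1) < v ! (i - 1)" using H[rule_format, of "i - 1" "j - 1"] by auto
    then show "x \<in> Inv v" using x \<open>1 \<le> i\<close> \<open>i < j\<close> by (auto simp: Inv_mem)
  qed
qed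

lemma weak_le_iff:
  "weak_le u v \<longleftrightarrow> is_perm u \<and> is_perm v \<and> length u = length v \<and>
     (\<forall>i j. i < j \<longrightarrow> j < length u \<longrightarrow> u ! j < u ! i \<longrightarrow> v ! j < v ! i)"
  unfolding weak_le_def Inv_sub_iff by auto

lemma weak_le_refl: "is_perm u \<Longrightarrow> weak_le u u"
  by (simp add: weak_le_def)

lemma weak_le_trans: "weak_le u v \<Longrightarrow> weak_le v w \<Longrightarrow> weak_le u w"
  by (auto simp: weak_le_def)

lemma weak_le_perm: "weak_le u v \<Longrightarrow> is_perm u \<and> is_perm v \<and> length v = length u"
  by (simp add: weak_le_def)

lemma perm_eq_pattern:
  assumes "is_perm u" "is_perm v" "length u = length v"
    and "\<And>i j. i < length u \<Longrightarrow> j < length u \<Longrightarrow> u ! i < u ! j \<longleftrightarrow> v ! i < v ! j"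
  shows "u = v"
proof -
  have "st u = st v"
  proof (rule nth_equalityI)
    show "length (st u) = length (st v)" using assms by simp
    fix i assume i: "i < length (st u)"
    have "{j. j < length u \<and> u ! j \<le> u ! i} = {j. j < length v \<and> v ! j \<le> v ! i}"
      using assms(3) assms(4) i by (auto simp: not_less[symmetric])
    then show "st u ! i = st v ! i" using i assms by (simp add: st_nth is_perm_def)
  qed
  then show ?thesis using assms by (simp add: st_perm)
qed

lemma weak_le_antisym:
  assumes "weak_le u v" "weak_le v u" shows "u = v"
proof -
  have pu: "is_perm u" and pv: "is_perm v" and l: "length u = length v"
    using assms by (auto simp: weak_le_def)
  have du: "distinct u" and dv: "distinct v" using pu pv by (auto simp: is_perm_def)
  have uv: "\<And>i j. i < j \<Longrightarrow> j < length u \<Longrightarrow> u ! j < u ! i \<longleftrightarrow> v ! j < v ! i"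
    using assms l by (auto simp: weak_le_iff)
  show ?thesis
  proof (rule perm_eq_pattern[OF pu pv l])
    fix i j assume i: "i < length u" and j: "j < length u"
    consider "i < j" | "i = j" | "j < i" by linarith
    then show "u ! i < u ! j \<longleftrightarrow> v ! i < v ! j"
    proof cases
      case 1
      have "u ! i \<noteq> u ! j" "v ! i \<noteq> v ! j" using 1 i j du dv l by (auto simp: nth_eq_iff_index_eq)
      then show ?thesis using uv[OF 1 j] by auto
    next
      case 2 then show ?thesis by simp
    next
      case 3 then show ?thesis using uv[OF 3 i] by simp
    qed
  qed
qed

lemma finite_Inv: "finite (Inv u)"
proof -
  have "Inv u \<subseteq> {1..length u} \<times> {1..length u}" by (auto simp: Inv_def)
  then show ?thesis using finite_subset by blast
qed

lemma weak_le_card: "weak_le u v \<Longrightarrow> card (Inv u) \<le> card (Inv v)"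
  by (simp add: weak_le_def card_mono finite_Inv)

lemma weak_lt_card: assumes "weak_lt u v" shows "card (Inv u) < card (Inv v)"
proof -
  have "Inv u \<subseteq> Inv v" "u \<noteq> v" using assms by (auto simp: weak_lt_def weak_le_def)
  moreover have "Inv u \<noteq> Inv v"
  proof
    assume "Inv u = Inv v"
    then have "weak_le v u" using assms by (auto simp: weak_lt_def weak_le_def)
    then show False using assms weak_le_antisym by (auto simp: weak_lt_def)
  qed
  ultimately show ?thesis by (simp add: psubset_card_mono finite_Inv)
qed

lemma weak_le_finite: "finite {v. weak_le u v}"
proof -
  have "{v. weak_le u v} \<subseteq> {v. is_perm v \<and> length v = length u}" by (auto simp: weak_le_def)
  then show ?thesis using perm_length_finite finite_subset by blast
qed

lemma weak_le_finite2: "finite {v. weak_le u v \<and> P v}"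
  using weak_le_finite by (rule finite_subset[rotated]) auto

lemma weak_le_st_take:
  assumes "is_perm v" "is_perm a" "length a \<le> length v"
  shows "weak_le (st (take (length a) v)) a \<longleftrightarrow>
    (\<forall>i j. i < j \<longrightarrow> j < length a \<longrightarrow> v ! j < v ! i \<longrightarrow> a ! j < a ! i)"
proof -
  let ?t = "take (length a) v"
  have dt: "distinct ?t" using assms by (simp add: is_perm_def)
  have "\<And>i j. i < length a \<Longrightarrow> j < length a \<Longrightarrow> st ?t ! j < st ?t ! i \<longleftrightarrow> v ! j < v ! i"
    using st_less[OF dt] assms(3) by simp
  then show ?thesis using perm_st[OF dt] assms by (auto simp: weak_le_iff min_def)
qed

lemma weak_le_st_drop:
  assumes "is_perm v" "is_perm b" "length v = p + length b"
  shows "weak_le (st (drop p v)) b \<longleftrightarrow>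
    (\<forall>i j. i < j \<longrightarrow> j < length b \<longrightarrow> v ! (p + j) < v ! (p + i) \<longrightarrow> b ! j < b ! i)"
proof -
  let ?t = "drop p v"
  have dt: "distinct ?t" using assms by (simp add: is_perm_def)
  have "\<And>i j. i < length b \<Longrightarrow> j < length b \<Longrightarrow> st ?t ! j < st ?t ! i \<longleftrightarrow> v ! (p + j) < v ! (p + i)"
    using st_less[OF dt] assms(3) by simp
  then show ?thesis using perm_st[OF dt] assms by (auto simp: weak_le_iff)
qed

lemma weak_le_over:
  assumes v: "is_perm v" and a: "is_perm a" and b: "is_perm b" and l: "length v = length a + length b"
  shows "weak_le v (over a b) \<longleftrightarrow>
    weak_le (st (take (length a) v)) a \<and> weak_le (st (drop (length a) v)) b"
proof -
  have ab: "is_perm (over a b)" using a b by (rule perm_over)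
  have aR: "\<And>i. i < length a \<Longrightarrow> 1 \<le> a ! i" using perm_nth[OF a] by blast
  have bR: "\<And>i. i < length b \<Longrightarrow> b ! i \<le> length b" using perm_nth[OF b] by blast
  have "weak_le v (over a b) \<longleftrightarrow>
     (\<forall>i j. i < j \<longrightarrow> j < length v \<longrightarrow> v ! j < v ! i \<longrightarrow> over a b ! j < over a b ! i)"
    using v ab l by (simp add: weak_le_iff)
  also have "\<dots> \<longleftrightarrow> (\<forall>i j. i < j \<longrightarrow> j < length a \<longrightarrow> v ! j < v ! i \<longrightarrow> a ! j < a ! i) \<and>
     (\<forall>i j. i < j \<longrightarrow> j < length b \<longrightarrow> v ! (length a + j) < v ! (length a + i) \<longrightarrow> b ! j < b ! i)"
    (is "?L \<longleftrightarrow> ?A \<and> ?B")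
  proof
    assume L: ?L
    have A: ?A
    proof (intro allI impI)
      fix i j assume "i < j" "j < length a" "v ! j < v ! i"
      then show "a ! j < a ! i" using L[rule_format, of i j] l by (simp add: over_nth1)
    qed
    have B: ?B
    proof (intro allI impI)
      fix i j assume "i < j" "j < length b" "v ! (length a + j) < v ! (length a + i)"
      then show "b ! j < b ! i" using L[rule_format, of "length a + i" "length a + j"] l
        by (simp add: over_nth2)
    qed
    show "?A \<and> ?B" using A B by blast
  next
    assume AB: "?A \<and> ?B"
    show ?L
    proof (intro allI impI)
      fix i j assume ij: "i < j" "j < length v" "v ! j < v ! i"
      consider "j < length a" | "i < length a" "length a \<le> j" | "length a \<le> i" by linarith
      then show "over a b ! j < over a b ! i"
      proof cases
        case 1 then show ?thesis using AB ij by (simp add: over_nth1)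
      next
        case 2
        have "b ! (j - length a) \<le> length b" using bR 2 ij l by simp
        moreover have "1 \<le> a ! i" using aR 2 by simp
        ultimately show ?thesis using 2 by (simp add: over_nth1 over_nth2)
      next
        case 3
        then have "b ! (j - length a) < b ! (i - length a)"
          using AB[THEN conjunct2, rule_format, of "i - length a" "j - length a"] ij l by simp
        then show ?thesis using 3 ij by (simp add: over_nth2)
      qed
    qed
  qed
  also have "\<dots> \<longleftrightarrow> weak_le (st (take (length a) v)) a \<and> weak_le (st (drop (length a) v)) b"
    using weak_le_st_take[OF v a] weak_le_st_drop[OF v b l] l by simp
  finally show ?thesis .
qed




section \<open>Global descents\<close>

definition gd :: "nat list \<Rightarrow> nat \<Rightarrow> bool" where
  "gd w p \<longleftrightarrow> (\<forall>i j. i < p \<longrightarrow> p \<le> j \<longrightarrow> j < length w \<longrightarrow> w ! j < w ! i)"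

lemma GDes_iff: "p \<in> GDes w \<longleftrightarrow> 1 \<le> p \<and> p < length w \<and> gd w p"
proof
  assume "p \<in> GDes w"
  then have H: "1 \<le> p" "p \<le> length w - 1"
    "\<And>i j. 1 \<le> i \<and> i \<le> p \<and> p < j \<and> j \<le> length w \<longrightarrow> w ! (i - 1) > w ! (j - 1)"
    unfolding GDes_def by blast+
  have "gd w p" unfolding gd_def
  proof (intro allI impI)
    fix i j assume "i < p" "p \<le> j" "j < length w"
    then show "w ! j < w ! i" using H(3)[of "Suc i" "Suc j"] by simp
  qed
  then show "1 \<le> p \<and> p < length w \<and> gd w p" using H by auto
next
  assume H: "1 \<le> p \<and> p < length w \<and> gd w p"
  have "\<forall>i j. 1 \<le> i \<and> i \<le> p \<and> p < j \<and> j \<le> length w \<longrightarrow> w ! (i - 1) > w ! (j - 1)"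
  proof (intro allI impI)
    fix i j assume a: "1 \<le> i \<and> i \<le> p \<and> p < j \<and> j \<le> length w"
    have "i - 1 < p" "p \<le> j - 1" "j - 1 < length w" using a by auto
    then show "w ! (i - 1) > w ! (j - 1)" using H unfolding gd_def by blast
  qed
  moreover have "p \<le> length w - 1" using H by auto
  ultimately show "p \<in> GDes w" using H unfolding GDes_def by blast
qed

lemma finite_GDes: "finite (GDes w)"
  by (rule finite_subset[of _ "{..<length w}"]) (auto simp: GDes_iff)

lemma gd_over: assumes "is_perm a" "is_perm b" shows "gd (over a b) (length a)"
  unfolding gd_def
proof (intro allI impI)
  fix i j assume ij: "i < length a" "length a \<le> j" "j < length (over a b)"
  have "b ! (j - length a) \<le> length b" using perm_nth[OF assms(2)] ij by simp
  moreover have "1 \<le> a ! i" using perm_nth[OF assms(1)] ij by simp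
  ultimately show "over a b ! j < over a b ! i" using ij by (simp add: over_nth1 over_nth2)
qed

lemma gd_over_left: assumes "p < length a" "gd (over a b) p" shows "gd a p"
  unfolding gd_def
proof (intro allI impI)
  fix i j assume "i < p" "p \<le> j" "j < length a"
  then show "a ! j < a ! i" using assms(2)[unfolded gd_def, rule_format, of i j]
    by (simp add: over_nth1)
qed

lemma gd_over_left_iff: assumes "is_perm a" "is_perm b" "p < length a"
  shows "gd (over a b) p \<longleftrightarrow> gd a p"
proof
  assume "gd (over a b) p" then show "gd a p" using gd_over_left assms by blast
next
  assume g: "gd a p"
  show "gd (over a b) p" unfolding gd_def
  proof (intro allI impI)
    fix i j assume ij: "i < p" "p \<le> j" "j < length (over a b)"
    show "over a b ! j < over a b ! i"
    proof (cases "j < length a")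
      case True then show ?thesis using g ij assms by (auto simp: gd_def over_nth1)
    next
      case False
      have "b ! (j - length a) \<le> length b" using perm_nth[OF assms(2)] ij False by simp
      moreover have "1 \<le> a ! i" using perm_nth[OF assms(1)] ij assms(3) by simp
      ultimately show ?thesis using ij False assms(3) by (simp add: over_nth1 over_nth2)
    qed
  qed
qed

lemma gd_over_right_iff: assumes "is_perm a" "is_perm b" "length a < p"
  shows "gd (over a b) p \<longleftrightarrow> gd b (p - length a)"
proof
  assume g: "gd (over a b) p"
  show "gd b (p - length a)" unfolding gd_def
  proof (intro allI impI)
    fix i j assume ij: "i < p - length a" "p - length a \<le> j" "j < length b"
    then show "b ! j < b ! i" using g[unfolded gd_def, rule_format, of "length a + i" "length a + j"]
      by (simp add: over_nth2)
  qed
next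
  assume g: "gd b (p - length a)"
  show "gd (over a b) p" unfolding gd_def
  proof (intro allI impI)
    fix i j assume ij: "i < p" "p \<le> j" "j < length (over a b)"
    show "over a b ! j < over a b ! i"
    proof (cases "i < length a")
      case False
      then show ?thesis using g[unfolded gd_def, rule_format, of "i - length a" "j - length a"] ij assms(3)
        by (simp add: over_nth2)
    next
      case True
      have "b ! (j - length a) \<le> length b" using perm_nth[OF assms(2)] ij assms(3) by simp
      moreover have "1 \<le> a ! i" using perm_nth[OF assms(1)] True by simp
      ultimately show ?thesis using ij True assms(3) by (simp add: over_nth1 over_nth2)
    qed
  qed
qed

lemma GDes_over:
  assumes a: "is_perm a" "a \<noteq> []" and b: "is_perm b" "b \<noteq> []"
  shows "GDes (over a b) = GDes a \<union> {length a} \<union> (\<lambda>p. p + length a) ` GDes b"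
proof (rule set_eqI)
  fix p
  consider "p < length a" | "p = length a" | "length a < p" by linarith
  then show "p \<in> GDes (over a b) \<longleftrightarrow> p \<in> GDes a \<union> {length a} \<union> (\<lambda>p. p + length a) ` GDes b"
  proof cases
    case 1 then show ?thesis using gd_over_left_iff[OF a(1) b(1) 1] by (auto simp: GDes_iff)
  next
    case 2
    have "1 \<le> length a" using a(2) by (cases a) auto
    then show ?thesis using 2 gd_over[OF a(1) b(1)] a b by (auto simp: GDes_iff)
  next
    case 3
    have "p \<in> (\<lambda>p. p + length a) ` GDes b \<longleftrightarrow> p - length a \<in> GDes b"
      using 3 by (auto simp: image_iff intro!: bexI[where x="p - length a"])
    then show ?thesis using gd_over_right_iff[OF a(1) b(1) 3] 3 by (auto simp: GDes_iff)
  qed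
qed

lemma gd_split:
  assumes w: "is_perm w" and p: "p \<le> length w" and g: "gd w p"
  shows "is_perm (st (take p w)) \<and> is_perm (st (drop p w)) \<and>
         w = over (st (take p w)) (st (drop p w))"
proof -
  define n where "n = length w"
  define q where "q = n - p"
  define A where "A = set (take p w)"
  define B where "B = set (drop p w)"
  have dw: "distinct w" and sw: "set w = {1..n}" using w by (auto simp: is_perm_def n_def)
  have cA: "card A = p" using dw p by (simp add: A_def distinct_card n_def)
  have cB: "card B = q" using dw p by (simp add: B_def distinct_card n_def q_def)
  have AB: "A \<union> B = {1..n}" using sw by (metis A_def B_def set_append append_take_drop_id)
  have disj: "A \<inter> B = {}" using dw by (metis A_def B_def append_take_drop_id distinct_append)
  have gt: "\<And>x y. x \<in> A \<Longrightarrow> y \<in> B \<Longrightarrow> y < x"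
  proof -
    fix x y assume "x \<in> A" "y \<in> B"
    then obtain i j where "i < p" "x = w ! i" "j < length w - p" "y = w ! (p + j)"
      using p by (auto simp: A_def B_def in_set_conv_nth)
    then show "y < x" using g p unfolding gd_def by auto
  qed
  have Bsub: "B \<subseteq> {1..q}"
  proof
    fix y assume y: "y \<in> B"
    have y1: "y \<in> {1..n}" using y AB by blast
    show "y \<in> {1..q}"
    proof (rule ccontr)
      assume "y \<notin> {1..q}"
      then have yq: "q < y" using y1 by auto
      have "A \<subseteq> {y+1..n}" using gt[OF _ y] AB by fastforce
      then have "card A \<le> card {y+1..n}" by (rule card_mono[rotated]) simp
      then show False using cA yq y1 p unfolding q_def by simp
    qed
  qed
  have Beq: "B = {1..q}" using Bsub cB by (simp add: card_subset_eq)
  have Aeq: "A = {q+1..q+p}"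
  proof -
    have "A = {1..n} - B" using AB disj by blast
    also have "\<dots> = {q+1..q+p}" using Beq p by (auto simp: q_def n_def)
    finally show ?thesis .
  qed
  have pB: "is_perm (drop p w)" using Beq dw p by (simp add: is_perm_def B_def q_def n_def)
  have dA: "distinct (take p w)" using dw by simp
  have stA: "st (take p w) = map (\<lambda>x. x - q) (take p w)"
    by (rule st_shift[OF dA]) (use Aeq p in \<open>simp add: A_def min_def n_def\<close>)
  have pA: "is_perm (st (take p w))" using perm_st[OF dA] .
  have "map (\<lambda>x. x - q + q) (take p w) = take p w"
  proof (rule map_idI)
    fix x assume "x \<in> set (take p w)" then show "x - q + q = x" using Aeq A_def by auto
  qed
  then have "over (st (take p w)) (st (drop p w)) = w"
    using pB stA p by (simp add: over_def st_perm q_def n_def comp_def)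
  then show ?thesis using pA pB st_perm by simp
qed

section \<open>Components\<close>

definition irr :: "nat list \<Rightarrow> bool" where
  "irr u \<longleftrightarrow> is_perm u \<and> u \<noteq> [] \<and> GDes u = {}"

fun prodo :: "nat list list \<Rightarrow> nat list" where
  "prodo [] = []"
| "prodo (c # cs) = over c (prodo cs)"

lemma prodo_perm: "(\<forall>c\<in>set cs. is_perm c) \<Longrightarrow> is_perm (prodo cs)"
  by (induct cs) (auto intro: perm_over)

lemma prodo_append: "prodo (xs @ ys) = over (prodo xs) (prodo ys)"
  by (induct xs) (auto simp: over_assoc)

lemma prodo_Nil_iff: "(\<forall>c\<in>set cs. irr c) \<Longrightarrow> prodo cs = [] \<longleftrightarrow> cs = []"
  by (cases cs) (auto simp: irr_def over_def)

lemma card_GDes_prodo: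
  "(\<forall>c\<in>set cs. irr c) \<Longrightarrow> cs \<noteq> [] \<Longrightarrow> card (GDes (prodo cs)) = length cs - 1"
proof (induct cs)
  case Nil then show ?case by simp
next
  case (Cons c cs)
  show ?case
  proof (cases "cs = []")
    case True then show ?thesis using Cons by (simp add: irr_def)
  next
    case False
    have ic: "irr c" using Cons by simp
    have ne: "prodo cs \<noteq> []" using False Cons prodo_Nil_iff by simp
    have pp: "is_perm (prodo cs)" using Cons by (auto intro: prodo_perm simp: irr_def)
    have "GDes (prodo (c # cs)) = insert (length c) ((\<lambda>p. p + length c) ` GDes (prodo cs))"
      using GDes_over[of c "prodo cs"] ic ne pp by (auto simp: irr_def)
    moreover have "length c \<notin> (\<lambda>p. p + length c) ` GDes (prodo cs)" by (auto simp: GDes_iff)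
    moreover have "card ((\<lambda>p. p + length c) ` GDes (prodo cs)) = card (GDes (prodo cs))"
      by (rule card_image) (simp add: inj_on_def)
    ultimately show ?thesis using Cons False finite_GDes
      by (simp add: card_insert_if)
  qed
qed

lemma over_cancel:
  assumes a: "irr a" and c: "irr c" and b: "is_perm b" and d: "is_perm d"
    and e: "over a b = over c d"
  shows "a = c \<and> b = d"
proof -
  have pa: "is_perm a" and pc: "is_perm c" using a c by (auto simp: irr_def)
  have lt: False if ac: "irr x" "irr y" "is_perm z" "is_perm t" "over x z = over y t"
      "length x < length y" for x y z t
  proof -
    have "is_perm x" using ac(1) by (simp add: irr_def)
    then have "gd (over x z) (length x)" using gd_over ac(3) by blast
    then have "gd (over y t) (length x)" using ac(5) by simp
    then have "gd y (length x)" using gd_over_left ac by blast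
    moreover have "1 \<le> length x" using ac(1) by (cases x) (auto simp: irr_def)
    ultimately have "length x \<in> GDes y" using ac by (simp add: GDes_iff)
    then show False using ac by (simp add: irr_def)
  qed
  have la: "length a = length c"
    using lt[OF a c b d e] lt[OF c a d b e[symmetric]] by (meson linorder_neqE_nat)
  then have lb: "length b = length d" using arg_cong[OF e, of length] by simp
  have "take (length a) (over a b) = take (length a) (over c d)" using e by simp
  then have "map (\<lambda>x. x + length b) a = map (\<lambda>x. x + length b) c" using la lb by (simp add: over_def)
  then have "a = c" by (simp add: inj_map_eq_map inj_on_def)
  moreover have "drop (length a) (over a b) = drop (length a) (over c d)" using e by simp
  then have "b = d" using la lb by (simp add: over_def)
  ultimately show ?thesis by simp
qed

lemma comps_unique:
  "(\<forall>c\<in>set cs. irr c) \<Longrightarrow> (\<forall>c\<in>set ds. irr c) \<Longrightarrow> prodo cs = prodo ds \<Longrightarrow> cs = ds"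
proof (induct cs arbitrary: ds)
  case Nil then show ?case using prodo_Nil_iff[of ds] by simp
next
  case (Cons c cs)
  have "prodo (c # cs) \<noteq> []" using prodo_Nil_iff[of "c # cs"] Cons.prems(1) by blast
  then have "ds \<noteq> []" using Cons.prems(3) by auto
  then obtain d ds' where ds: "ds = d # ds'" by (cases ds) auto
  have i: "irr c" "irr d" "\<forall>c\<in>set cs. irr c" "\<forall>c\<in>set ds'. irr c" using Cons.prems ds by auto
  have "c = d \<and> prodo cs = prodo ds'"
  proof (rule over_cancel[OF i(1) i(2)])
    show "is_perm (prodo cs)" "is_perm (prodo ds')" using i by (auto intro!: prodo_perm simp: irr_def)
    show "over c (prodo cs) = over d (prodo ds')" using Cons.prems(3) ds by simp
  qed
  then show ?case using Cons.hyps[OF i(3) i(4)] ds by auto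
qed

lemma comps_exists: "is_perm w \<Longrightarrow> \<exists>cs. (\<forall>c\<in>set cs. irr c) \<and> prodo cs = w"
proof (induct "length w" arbitrary: w rule: less_induct)
  case less
  show ?case
  proof (cases "w = []")
    case True then show ?thesis by (intro exI[of _ "[]"]) simp
  next
    case False
    show ?thesis
    proof (cases "GDes w = {}")
      case True
      then show ?thesis using False less by (intro exI[of _ "[w]"]) (simp add: irr_def)
    next
      case False
      then obtain p where p: "p \<in> GDes w" by blast
      then have p1: "1 \<le> p" "p < length w" "gd w p" by (auto simp: GDes_iff)
      have sp: "is_perm (st (take p w)) \<and> is_perm (st (drop p w)) \<and>
         w = over (st (take p w)) (st (drop p w))"
        using gd_split[OF less(2) _ p1(3)] p1 by simp
      obtain cs1 where c1: "(\<forall>c\<in>set cs1. irr c) \<and> prodo cs1 = st (take p w)"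
      proof -
        have "length (st (take p w)) < length w" using p1 by simp
        then show ?thesis using less(1)[of "st (take p w)"] sp that by blast
      qed
      obtain cs2 where c2: "(\<forall>c\<in>set cs2. irr c) \<and> prodo cs2 = st (drop p w)"
      proof -
        have "length (st (drop p w)) < length w" using p1 by simp
        then show ?thesis using less(1)[of "st (drop p w)"] sp that by blast
      qed
      have "prodo (cs1 @ cs2) = w" using c1 c2 sp by (simp add: prodo_append)
      moreover have "\<forall>c\<in>set (cs1 @ cs2). irr c" using c1 c2 by auto
      ultimately show ?thesis by blast
    qed
  qed
qed

definition comps :: "nat list \<Rightarrow> nat list list" where
  "comps w = (THE cs. (\<forall>c\<in>set cs. irr c) \<and> prodo cs = w)"

lemma comps_prop:
  assumes "is_perm w" shows "(\<forall>c\<in>set (comps w). irr c) \<and> prodo (comps w) = w"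
proof -
  have "\<exists>!cs. (\<forall>c\<in>set cs. irr c) \<and> prodo cs = w"
    using comps_exists[OF assms] comps_unique by blast
  then show ?thesis unfolding comps_def by (rule theI')
qed

lemma comps_prodo: "(\<forall>c\<in>set cs. irr c) \<Longrightarrow> comps (prodo cs) = cs"
  using comps_prop[of "prodo cs"] comps_unique prodo_perm by (metis irr_def)

lemma comps_over: "is_perm a \<Longrightarrow> is_perm b \<Longrightarrow> comps (over a b) = comps a @ comps b"
proof -
  assume "is_perm a" "is_perm b"
  then have "(\<forall>c\<in>set (comps a @ comps b). irr c)" "prodo (comps a @ comps b) = over a b"
    using comps_prop[of a] comps_prop[of b] by (auto simp: prodo_append)
  then show ?thesis using comps_prodo[of "comps a @ comps b"] by simp
qed

lemma comps_Nil[simp]: "comps [] = []"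
  using comps_prodo[of "[]"] by simp

lemma Sk_char: "Sk k = {w. is_perm w \<and> length (comps w) = k}"
proof (cases "k = 0")
  case True
  have "is_perm w \<and> comps w = [] \<longleftrightarrow> w = []" for w
    using comps_prop[of w] by auto
  then show ?thesis using True by (auto simp: Sk_def)
next
  case False
  have "(is_perm w \<and> 1 \<le> length w \<and> card (GDes w) = k - 1) \<longleftrightarrow> (is_perm w \<and> length (comps w) = k)" for w
  proof (cases "is_perm w")
    case True
    note cp = comps_prop[OF True]
    show ?thesis
    proof (cases "w = []")
      case True then show ?thesis using False by simp
    next
      case wne: False
      then have "comps w \<noteq> []" using cp by auto
      then have "card (GDes w) = length (comps w) - 1" using card_GDes_prodo[of "comps w"] cp by simp
      then show ?thesis using wne False \<open>comps w \<noteq> []\<close> True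
        by (metis One_nat_def Suc_pred diff_Suc_1 length_greater_0_conv linorder_not_less
            less_one not_less_eq_eq)
    qed
  next
    case False then show ?thesis by simp
  qed
  then show ?thesis using False by (auto simp: Sk_def)
qed

lemma irr_Sk1: "irr u \<longleftrightarrow> u \<in> Sk 1"
proof
  assume "irr u" then show "u \<in> Sk 1" using comps_prodo[of "[u]"] by (simp add: Sk_char irr_def)
next
  assume "u \<in> Sk 1"
  then have "is_perm u" "length (comps u) = 1" by (auto simp: Sk_char)
  then obtain c where "comps u = [c]" by (auto simp: length_Suc_conv)
  then show "irr u" using comps_prop[OF \<open>is_perm u\<close>] by auto
qed




section \<open>Linear algebra on finitely supported functions\<close>

lemma scal_apply[simp]: "scal c f x = c * f x" by (simp add: scal_def)

lemma sum_if_sub: "finite T \<Longrightarrow> T1 \<subseteq> T \<Longrightarrow> (\<Sum>v\<in>T. if v \<in> T1 then f v else 0) = (\<Sum>v\<in>T1. f v)"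
  using sum.inter_restrict[of T f T1] by (simp add: Int_absorb1)

definition subsp :: "('a \<Rightarrow> rat) set \<Rightarrow> bool" where
  "subsp W \<longleftrightarrow> 0 \<in> W \<and> (\<forall>x\<in>W. \<forall>y\<in>W. x + y \<in> W) \<and> (\<forall>c. \<forall>x\<in>W. scal c x \<in> W)"

lemma subsp_sum: "subsp W \<Longrightarrow> (\<forall>i\<in>I. f i \<in> W) \<Longrightarrow> (\<Sum>i\<in>I. f i) \<in> W"
  by (induct I rule: infinite_finite_induct) (auto simp: subsp_def)

lemma subsp_comb: "subsp W \<Longrightarrow> (\<forall>i\<in>I. f i \<in> W) \<Longrightarrow> (\<Sum>i\<in>I. scal (c i) (f i)) \<in> W"
  by (rule subsp_sum) (auto simp: subsp_def)

lemma subsp_lspan: "subsp (lspan S)"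
  unfolding subsp_def
proof (intro conjI ballI allI)
  show "0 \<in> lspan S" unfolding lspan_def by (rule CollectI, rule exI[of _ "{}"]) simp
next
  fix x y assume "x \<in> lspan S" "y \<in> lspan S"
  obtain T1 c1 where t1: "finite T1" "T1 \<subseteq> S" "x = (\<Sum>v\<in>T1. scal (c1 v) v)"
    using \<open>x \<in> lspan S\<close> unfolding lspan_def by blast
  obtain T2 c2 where t2: "finite T2" "T2 \<subseteq> S" "y = (\<Sum>v\<in>T2. scal (c2 v) v)"
    using \<open>y \<in> lspan S\<close> unfolding lspan_def by blast
  note t = t1 t2
  define c where "c v = (if v \<in> T1 then c1 v else 0) + (if v \<in> T2 then c2 v else 0)" for v
  have "x + y = (\<Sum>v\<in>T1 \<union> T2. scal (c v) v)"
  proof (rule ext)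
    fix z
    have "(\<Sum>v\<in>T1 \<union> T2. scal (c v) v) z =
        (\<Sum>v\<in>T1 \<union> T2. if v \<in> T1 then c1 v * v z else 0) + (\<Sum>v\<in>T1 \<union> T2. if v \<in> T2 then c2 v * v z else 0)"
    proof -
      have "\<And>v. scal (c v) v z = (if v \<in> T1 then c1 v * v z else 0) + (if v \<in> T2 then c2 v * v z else 0)"
        by (simp add: c_def distrib_right)
      then show ?thesis by (simp add: sum_fun_app sum.distrib)
    qed
    also have "\<dots> = (\<Sum>v\<in>T1. c1 v * v z) + (\<Sum>v\<in>T2. c2 v * v z)"
      using t by (simp add: sum_if_sub)
    finally show "(x + y) z = (\<Sum>v\<in>T1 \<union> T2. scal (c v) v) z" using t by (simp add: sum_fun_app)
  qed
  moreover have "finite (T1 \<union> T2)" "T1 \<union> T2 \<subseteq> S" using t by auto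
  ultimately show "x + y \<in> lspan S" unfolding lspan_def
    by (intro CollectI exI[of _ "T1 \<union> T2"] exI[of _ c] conjI)
next
  fix a x assume "x \<in> lspan S"
  then obtain T c where t: "finite T" "T \<subseteq> S" "x = (\<Sum>v\<in>T. scal (c v) v)" unfolding lspan_def by blast
  have "scal a x = (\<Sum>v\<in>T. scal (a * c v) v)"
    using t by (simp add: fun_eq_iff sum_fun_app sum_distrib_left mult.assoc)
  then show "scal a x \<in> lspan S" using t(1,2) unfolding lspan_def
    by (intro CollectI exI[of _ T] exI[of _ "\<lambda>v. a * c v"] conjI)
qed

lemma lspan_inc: "S \<subseteq> lspan S"
proof
  fix x assume "x \<in> S"
  then show "x \<in> lspan S" unfolding lspan_def
    by (intro CollectI exI[of _ "{x}"] exI[of _ "\<lambda>_. 1"]) (simp add: scal_def)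
qed

lemma lspan_least: assumes "subsp W" "S \<subseteq> W" shows "lspan S \<subseteq> W"
proof
  fix x assume "x \<in> lspan S"
  then obtain T c where t: "finite T" "T \<subseteq> S" "x = (\<Sum>v\<in>T. scal (c v) v)" unfolding lspan_def by blast
  have "\<forall>v\<in>T. v \<in> W" using t(2) assms(2) by blast
  then show "x \<in> W" using subsp_comb[OF assms(1), of T "\<lambda>v. v" c] t(3) by simp
qed

lemma lspan_mono: "S \<subseteq> S' \<Longrightarrow> lspan S \<subseteq> lspan S'"
  by (meson lspan_inc lspan_least order_trans subsp_lspan)

lemma lspan_idem: "lspan (lspan S) = lspan S"
  by (simp add: lspan_inc lspan_least subsp_lspan subset_antisym)

lemma lspan_sum: "(\<forall>i\<in>I. f i \<in> lspan S) \<Longrightarrow> (\<Sum>i\<in>I. f i) \<in> lspan S"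
  by (rule subsp_sum[OF subsp_lspan])

lemma lspan_comb: "(\<forall>i\<in>I. f i \<in> lspan S) \<Longrightarrow> (\<Sum>i\<in>I. scal (c i) (f i)) \<in> lspan S"
  by (rule subsp_comb[OF subsp_lspan])

lemma lspan_image_form:
  assumes "x \<in> lspan (f ` A)"
  shows "\<exists>W c. finite W \<and> W \<subseteq> A \<and> x = (\<Sum>w\<in>W. scal (c w) (f w))"
proof -
  obtain T c where t: "finite T" "T \<subseteq> f ` A" "x = (\<Sum>v\<in>T. scal (c v) v)"
    using assms unfolding lspan_def by blast
  define W where "W = inv_into A f ` T"
  have fi: "\<And>v. v \<in> T \<Longrightarrow> f (inv_into A f v) = v" using t(2) by (meson f_inv_into_f subsetD)
  have fw: "f ` W = T" unfolding W_def image_image using fi by simp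
  have inj: "inj_on f W" unfolding W_def using fi by (auto simp: inj_on_def)
  have "(\<Sum>w\<in>W. scal (c (f w)) (f w)) = (\<Sum>v\<in>T. scal (c v) v)"
    using sum.reindex[OF inj, of "\<lambda>v. scal (c v) v"] fw by simp
  moreover have "W \<subseteq> A" unfolding W_def using t(2) by (auto intro: inv_into_into)
  moreover have "finite W" unfolding W_def using t(1) by simp
  ultimately show ?thesis using t(3) by (intro exI[of _ W] exI[of _ "\<lambda>w. c (f w)"]) simp
qed

lemma lspan_UN: "lspan (\<Union>k. lspan (A k)) = lspan (\<Union>k. A k)"
proof
  show "lspan (\<Union>k. lspan (A k)) \<subseteq> lspan (\<Union>k. A k)"
    by (rule lspan_least[OF subsp_lspan]) (use lspan_mono in blast)
  show "lspan (\<Union>k. A k) \<subseteq> lspan (\<Union>k. lspan (A k))"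
    by (rule lspan_mono) (use lspan_inc in blast)
qed

definition lin :: "('a \<Rightarrow> rat) set \<Rightarrow> (('a \<Rightarrow> rat) \<Rightarrow> ('b \<Rightarrow> rat)) \<Rightarrow> bool" where
  "lin D f \<longleftrightarrow> (\<forall>x\<in>D. \<forall>y\<in>D. f (x + y) = f x + f y) \<and> (\<forall>c. \<forall>x\<in>D. f (scal c x) = scal c (f x))"

lemma lin_zero: "subsp D \<Longrightarrow> lin D f \<Longrightarrow> f 0 = 0"
proof -
  assume "subsp D" "lin D f"
  then have "f (scal 0 0) = scal 0 (f 0)" by (auto simp: lin_def subsp_def)
  moreover have "scal 0 (0::'a \<Rightarrow> rat) = 0" "scal 0 (f 0) = 0" by (auto simp: scal_def fun_eq_iff)
  ultimately show "f 0 = 0" by simp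
qed

lemma lin_sum:
  assumes D: "subsp D" and f: "lin D f"
  shows "(\<forall>i\<in>I. g i \<in> D) \<Longrightarrow> f (\<Sum>i\<in>I. g i) = (\<Sum>i\<in>I. f (g i))"
proof (induct I rule: infinite_finite_induct)
  case (infinite A)
  have "sum g A = 0" "(\<Sum>i\<in>A. f (g i)) = 0" using infinite(1) by simp_all
  then show ?case using lin_zero[OF D f] by (simp only:)
next
  case empty
  have "sum g {} = 0" "(\<Sum>i\<in>{}. f (g i)) = 0" by simp_all
  then show ?case using lin_zero[OF D f] by (simp only:)
next
  case (insert x F)
  have s: "(\<Sum>i\<in>F. g i) \<in> D" using insert(4) subsp_sum[OF D, of F g] by simp
  have gx: "g x \<in> D" using insert(4) by simp
  have "f (g x + (\<Sum>i\<in>F. g i)) = f (g x) + f (\<Sum>i\<in>F. g i)"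
    using f s gx unfolding lin_def by blast
  moreover have "f (\<Sum>i\<in>F. g i) = (\<Sum>i\<in>F. f (g i))" using insert(3,4) by simp
  moreover have "(\<Sum>i\<in>insert x F. g i) = g x + (\<Sum>i\<in>F. g i)" using insert(1,2) by (rule sum.insert)
  moreover have "(\<Sum>i\<in>insert x F. f (g i)) = f (g x) + (\<Sum>i\<in>F. f (g i))" using insert(1,2) by (rule sum.insert)
  ultimately show ?case by (simp only:)
qed

lemma lin_comb: "subsp D \<Longrightarrow> lin D f \<Longrightarrow> (\<forall>i\<in>I. g i \<in> D) \<Longrightarrow>
   f (\<Sum>i\<in>I. scal (c i) (g i)) = (\<Sum>i\<in>I. scal (c i) (f (g i)))"
  by (subst lin_sum) (auto simp: lin_def subsp_def)

lemma lin_image_lspan: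
  assumes D: "subsp D" and f: "lin D f" and S: "S \<subseteq> D"
  shows "f ` lspan S = lspan (f ` S)"
proof
  show "f ` lspan S \<subseteq> lspan (f ` S)"
  proof
    fix y assume "y \<in> f ` lspan S"
    then obtain x where x: "x \<in> lspan S" "y = f x" by blast
    then obtain T c where t: "finite T" "T \<subseteq> S" "x = (\<Sum>v\<in>T. scal (c v) v)" unfolding lspan_def by blast
    have "y = (\<Sum>v\<in>T. scal (c v) (f v))" using lin_comb[OF D f, of T "\<lambda>v. v" c] t x S by auto
    moreover have "\<forall>v\<in>T. f v \<in> lspan (f ` S)" using t(2) lspan_inc[of "f ` S"] by blast
    ultimately show "y \<in> lspan (f ` S)" using lspan_comb by simp
  qed
next
  have LD: "lspan S \<subseteq> D" using lspan_least[OF D S] .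
  have "subsp (f ` lspan S)" unfolding subsp_def
  proof (intro conjI ballI allI)
    show "0 \<in> f ` lspan S" using lin_zero[OF D f] subsp_lspan[of S] by (force simp: subsp_def)
  next
    fix x y assume "x \<in> f ` lspan S" "y \<in> f ` lspan S"
    then obtain x' y' where "x' \<in> lspan S" "y' \<in> lspan S" "x = f x'" "y = f y'" by blast
    then have "x + y = f (x' + y')" "x' + y' \<in> lspan S" using f LD subsp_lspan[of S]
      unfolding lin_def subsp_def by (metis subsetD)+
    then show "x + y \<in> f ` lspan S" by blast
  next
    fix c x assume "x \<in> f ` lspan S"
    then obtain x' where "x' \<in> lspan S" "x = f x'" by blast
    then have "scal c x = f (scal c x')" "scal c x' \<in> lspan S" using f LD subsp_lspan[of S]
      unfolding lin_def subsp_def by (metis subsetD)+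
    then show "scal c x \<in> f ` lspan S" by blast
  qed
  then show "lspan (f ` S) \<subseteq> f ` lspan S"
    by (rule lspan_least) (use lspan_inc in blast)
qed

lemma lin_eq_on_lspan:
  assumes D: "subsp D" and f: "lin D f" and g: "lin D g" and S: "S \<subseteq> D"
    and eq: "\<And>x. x \<in> S \<Longrightarrow> f x = g x" and x: "x \<in> lspan S"
  shows "f x = g x"
proof -
  obtain T c where t: "finite T" "T \<subseteq> S" "x = (\<Sum>v\<in>T. scal (c v) v)" using x unfolding lspan_def by blast
  have "\<forall>v\<in>T. v \<in> D" using t S by blast
  then have "f x = (\<Sum>v\<in>T. scal (c v) (f v))" "g x = (\<Sum>v\<in>T. scal (c v) (g v))"
    using t(3) lin_comb[OF D f, of T "\<lambda>v. v" c] lin_comb[OF D g, of T "\<lambda>v. v" c] by simp_all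
  moreover have "(\<Sum>v\<in>T. scal (c v) (f v)) = (\<Sum>v\<in>T. scal (c v) (g v))"
    using t(2) eq by (intro sum.cong) auto
  ultimately show ?thesis by simp
qed

definition FS :: "('a \<Rightarrow> rat) set" where "FS = {f. finite (fsupp f)}"

lemma fsupp_add: "fsupp (f + g) \<subseteq> fsupp f \<union> fsupp g" by (auto simp: fsupp_def)
lemma fsupp_scal: "fsupp (scal c f) \<subseteq> fsupp f" by (auto simp: fsupp_def)

lemma subsp_FS: "subsp FS"
  unfolding subsp_def FS_def
  by (auto simp: fsupp_def[symmetric] intro: finite_subset[OF fsupp_add] finite_subset[OF fsupp_scal])
    (simp add: fsupp_def)

lemma subsp_SSym: "subsp SSym"
  unfolding subsp_def SSym_def
proof (intro conjI ballI allI)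
  show "0 \<in> {f. finite (fsupp f) \<and> (\<forall>u\<in>fsupp f. is_perm u)}" by (simp add: fsupp_def)
next
  fix x y assume "x \<in> {f. finite (fsupp f) \<and> (\<forall>u\<in>fsupp f. is_perm u)}" "y \<in> {f. finite (fsupp f) \<and> (\<forall>u\<in>fsupp f. is_perm u)}"
  then show "x + y \<in> {f. finite (fsupp f) \<and> (\<forall>u\<in>fsupp f. is_perm u)}"
    using fsupp_add[of x y] by (auto intro: finite_subset)
next
  fix c x assume "x \<in> {f. finite (fsupp f) \<and> (\<forall>u\<in>fsupp f. is_perm u)}"
  then show "scal c x \<in> {f. finite (fsupp f) \<and> (\<forall>u\<in>fsupp f. is_perm u)}"
    using fsupp_scal[of c x] by (auto intro: finite_subset)
qed

lemma SSym_FS: "SSym \<subseteq> FS" by (auto simp: SSym_def FS_def)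

definition linext :: "('a \<Rightarrow> ('b \<Rightarrow> rat)) \<Rightarrow> ('a \<Rightarrow> rat) \<Rightarrow> ('b \<Rightarrow> rat)" where
  "linext P f = (\<Sum>u\<in>fsupp f. scal (f u) (P u))"

lemma linext_eq:
  assumes "finite S" "fsupp f \<subseteq> S"
  shows "linext P f = (\<Sum>u\<in>S. scal (f u) (P u))"
  unfolding linext_def
  by (rule sum.mono_neutral_left[OF assms]) (auto simp: fsupp_def scal_def fun_eq_iff)

lemma lin_linext: "lin FS (linext P)"
  unfolding lin_def
proof (intro conjI ballI allI)
  fix x y :: "'a \<Rightarrow> rat" assume "x \<in> FS" "y \<in> FS"
  then have f: "finite (fsupp x \<union> fsupp y)" by (simp add: FS_def)
  show "linext P (x + y) = linext P x + linext P y"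
    using linext_eq[OF f, of "x + y" P] linext_eq[OF f, of x P] linext_eq[OF f, of y P] fsupp_add[of x y]
    by (simp add: fun_eq_iff sum_fun_app sum.distrib distrib_right)
next
  fix c and x :: "'a \<Rightarrow> rat" assume "x \<in> FS"
  then have f: "finite (fsupp x)" by (simp add: FS_def)
  show "linext P (scal c x) = scal c (linext P x)"
    using linext_eq[OF f, of "scal c x" P] linext_eq[OF f, of x P] fsupp_scal[of c x]
    by (simp add: fun_eq_iff sum_fun_app sum_distrib_left mult.assoc)
qed

lemma fsupp_FF: "fsupp (FF a) = {a}" by (auto simp: fsupp_def FF_def)

lemma FF_FS: "FF a \<in> FS" by (simp add: FS_def fsupp_FF)

lemma linext_FF: "linext P (FF a) = P a"
  unfolding linext_def fsupp_FF by (simp add: FF_def scal_def)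

lemma comb_FF_apply: "finite V \<Longrightarrow> (\<Sum>v\<in>V. scal (c v) (FF v)) u = (if u \<in> V then c u else 0)"
  by (simp add: sum_fun_app FF_def if_distrib[of "\<lambda>x. _ * x"] sum.delta cong: if_cong)

lemma linext_comb:
  assumes "finite V"
  shows "linext P (\<Sum>v\<in>V. scal (c v) (FF v)) = (\<Sum>v\<in>V. scal (c v) (P v))"
proof -
  have "fsupp (\<Sum>v\<in>V. scal (c v) (FF v)) \<subseteq> V" using comb_FF_apply[OF assms] by (auto simp: fsupp_def)
  then have "linext P (\<Sum>v\<in>V. scal (c v) (FF v)) = (\<Sum>u\<in>V. scal ((\<Sum>v\<in>V. scal (c v) (FF v)) u) (P u))"
    by (rule linext_eq[OF assms])
  also have "\<dots> = (\<Sum>v\<in>V. scal (c v) (P v))"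
    by (rule sum.cong) (simp_all add: comb_FF_apply[OF assms])
  finally show ?thesis .
qed

lemma FS_expand: "f \<in> FS \<Longrightarrow> f = (\<Sum>u\<in>fsupp f. scal (f u) (FF u))"
  by (rule ext) (auto simp: comb_FF_apply FS_def fsupp_def)

lemma Delta_linext: "Delta = linext DeltaF"
  by (simp add: fun_eq_iff Delta_def linext_def)

section \<open>Triangular families are independent\<close>

lemma triangular_indep:
  fixes g :: "'i \<Rightarrow> ('k \<Rightarrow> rat)"
  assumes W: "finite W"
    and diag: "\<And>i. i \<in> W \<Longrightarrow> g i (key i) \<noteq> 0"
    and tri: "\<And>i j. i \<in> W \<Longrightarrow> j \<in> W \<Longrightarrow> i \<noteq> j \<Longrightarrow> g i (key j) \<noteq> 0 \<Longrightarrow> rank i < (rank j :: nat)"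
    and z: "(\<Sum>i\<in>W. scal (c i) (g i)) = 0"
  shows "\<forall>i\<in>W. c i = 0"
proof (rule ccontr)
  assume "\<not> (\<forall>i\<in>W. c i = 0)"
  then have ne: "{i\<in>W. c i \<noteq> 0} \<noteq> {}" by blast
  have fin: "finite {i\<in>W. c i \<noteq> 0}" using W by simp
  obtain j where j: "j \<in> {i\<in>W. c i \<noteq> 0}" and jmin: "\<And>i. i \<in> {i\<in>W. c i \<noteq> 0} \<Longrightarrow> rank j \<le> rank i"
    using ex_has_least_nat[of "\<lambda>i. i \<in> {i\<in>W. c i \<noteq> 0}" _ rank] ne by blast
  have "(\<Sum>i\<in>W. scal (c i) (g i)) (key j) = (\<Sum>i\<in>W. if i = j then c j * g j (key j) else 0)"
  proof -
    have "\<And>i. i \<in> W \<Longrightarrow> c i * g i (key j) = (if i = j then c j * g j (key j) else 0)"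
    proof -
      fix i assume i: "i \<in> W"
      show "c i * g i (key j) = (if i = j then c j * g j (key j) else 0)"
      proof (cases "i = j")
        case False
        show ?thesis
        proof (cases "c i = 0")
          case False
          have "g i (key j) = 0"
          proof (rule ccontr)
            assume "g i (key j) \<noteq> 0"
            then have "rank i < rank j" using tri[OF i _ \<open>i \<noteq> j\<close>] j by blast
            then show False using jmin[of i] i False by simp
          qed
          then show ?thesis using \<open>i \<noteq> j\<close> by simp
        qed (use \<open>i \<noteq> j\<close> in simp)
      qed simp
    qed
    then show ?thesis by (simp add: sum_fun_app)
  qed
  also have "\<dots> = c j * g j (key j)" using j W by (simp add: sum.delta)
  finally have "c j * g j (key j) = 0" using z by simp
  then show False using j diag by simp
qed




section \<open>Moebius function\<close>

lemma pairs_finite: "finite {(i, j). 1 \<le> i \<and> i < j \<and> j \<le> (n::nat)}"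
  by (rule finite_subset[of _ "{1..n} \<times> {1..n}"]) auto

lemma card_pairs_le_fact: "card {(i, j). 1 \<le> i \<and> i < j \<and> j \<le> (n::nat)} \<le> fact n"
proof (induct n)
  case 0
  have e: "{(i, j). 1 \<le> i \<and> i < j \<and> j \<le> (0::nat)} = {}" by auto
  show ?case unfolding e by simp
next
  case (Suc n)
  have eq: "{(i, j). 1 \<le> i \<and> i < j \<and> j \<le> Suc n} =
     {(i, j). 1 \<le> i \<and> i < j \<and> j \<le> n} \<union> (\<lambda>i. (i, Suc n)) ` {1..n}"
    by (auto simp: le_Suc_eq)
  have "card {(i, j). 1 \<le> i \<and> i < j \<and> j \<le> Suc n} \<le>
      card {(i, j). 1 \<le> i \<and> i < j \<and> j \<le> n} + card ((\<lambda>i. (i, Suc n)) ` {1..n})"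
    unfolding eq by (rule card_Un_le)
  also have "\<dots> \<le> fact n + n" using Suc card_image_le[of "{1..n}" "\<lambda>i. (i, Suc n)"] by simp
  also have "\<dots> \<le> fact (Suc n)"
  proof -
    have "n \<le> n * fact n" using fact_ge_1[of n] by simp
    then show ?thesis by (simp add: fact_Suc)
  qed
  finally show ?case .
qed

lemma card_Inv_le_fact: "card (Inv u) \<le> fact (length u)"
proof -
  have "Inv u \<subseteq> {(i, j). 1 \<le> i \<and> i < j \<and> j \<le> length u}" by (auto simp: Inv_def)
  then have "card (Inv u) \<le> card {(i, j). 1 \<le> i \<and> i < j \<and> j \<le> length u}"
    by (rule card_mono[OF pairs_finite])
  then show ?thesis using card_pairs_le_fact order_trans by blast
qed

lemma mob_aux_stable:
  "weak_le u v \<Longrightarrow> card (Inv v) - card (Inv u) < m \<Longrightarrow> card (Inv v) - card (Inv u) < m'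
    \<Longrightarrow> mob_aux m u v = mob_aux m' u v"
proof (induct m arbitrary: m' v)
  case 0 then show ?case by simp
next
  case (Suc m)
  obtain m0 where m': "m' = Suc m0" using Suc.prems(3) by (cases m') auto
  have eqsum: "(\<Sum>w\<in>{w. weak_le u w \<and> weak_lt w v}. mob_aux m u w) = (\<Sum>w\<in>{w. weak_le u w \<and> weak_lt w v}. mob_aux m0 u w)"
  proof (rule sum.cong[OF refl])
    fix w assume w: "w \<in> {w. weak_le u w \<and> weak_lt w v}"
    then have "card (Inv w) < card (Inv v)" "card (Inv u) \<le> card (Inv w)"
      using weak_lt_card weak_le_card by auto
    then have "card (Inv w) - card (Inv u) < m" "card (Inv w) - card (Inv u) < m0"
      using Suc.prems m' by linarith+
    then show "mob_aux m u w = mob_aux m0 u w" using Suc.hyps w by blast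
  qed
  show ?case unfolding m' mob_aux.simps(2) by (simp only: eqsum)
qed

lemma mobius_refl: "is_perm u \<Longrightarrow> mobius u u = 1"
  by (simp add: mobius_def)

lemma mobius_rec:
  assumes "weak_lt u v"
  shows "mobius u v = - (\<Sum>w\<in>{w. weak_le u w \<and> weak_lt w v}. mobius u w)"
proof -
  have uv: "u \<noteq> v" using assms by (simp add: weak_lt_def)
  have "mobius u v = - (\<Sum>w\<in>{w. weak_le u w \<and> weak_lt w v}. mob_aux (fact (length v)) u w)"
    using uv assms by (simp add: mobius_def)
  also have "(\<Sum>w\<in>{w. weak_le u w \<and> weak_lt w v}. mob_aux (fact (length v)) u w) =
      (\<Sum>w\<in>{w. weak_le u w \<and> weak_lt w v}. mobius u w)"
  proof (rule sum.cong[OF refl])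
    fix w assume w: "w \<in> {w. weak_le u w \<and> weak_lt w v}"
    then have "card (Inv w) < card (Inv v)" "length w = length v"
      using weak_lt_card by (auto simp: weak_lt_def weak_le_def)
    moreover have "card (Inv v) \<le> fact (length v)" by (rule card_Inv_le_fact)
    ultimately have a: "card (Inv w) - card (Inv u) < fact (length v)" by linarith
    then have "card (Inv w) - card (Inv u) < fact (length w) + 1" using \<open>length w = length v\<close> by simp
    note a this
    then show "mob_aux (fact (length v)) u w = mobius u w"
      unfolding mobius_def using mob_aux_stable w by blast
  qed
  finally show ?thesis .
qed

lemma mobius_sum:
  assumes "weak_le u v"
  shows "(\<Sum>w\<in>{w. weak_le u w \<and> weak_le w v}. mobius u w) = (if u = v then 1 else 0)"
proof (cases "u = v")
  case True
  have "{w. weak_le u w \<and> weak_le w v} = {u}" using True assms weak_le_antisym weak_le_refl weak_le_perm by blast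
  then show ?thesis using True assms by (simp add: mobius_refl weak_le_perm)
next
  case False
  have eq: "{w. weak_le u w \<and> weak_le w v} = insert v {w. weak_le u w \<and> weak_lt w v}"
    using assms weak_le_refl[of v] weak_le_perm[OF assms] by (auto simp: weak_lt_def)
  have "v \<notin> {w. weak_le u w \<and> weak_lt w v}" by (simp add: weak_lt_def)
  moreover have "finite {w. weak_le u w \<and> weak_lt w v}" by (rule weak_le_finite2)
  ultimately have "(\<Sum>w\<in>{w. weak_le u w \<and> weak_le w v}. mobius u w) =
      mobius u v + (\<Sum>w\<in>{w. weak_le u w \<and> weak_lt w v}. mobius u w)"
    unfolding eq by simp
  then show ?thesis using mobius_rec[of u v] False assms by (simp add: weak_lt_def)
qed

lemma mob_inv:
  fixes H :: "nat list \<Rightarrow> 'a \<Rightarrow> rat"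
  assumes x: "is_perm x"
  shows "(\<Sum>v\<in>{v. weak_le x v}. scal (of_int (mobius x v)) (\<Sum>w\<in>{w. weak_le v w}. H w)) = H x"
proof (rule ext)
  fix z
  define U where "U = {v. weak_le x v}"
  have fU: "finite U" unfolding U_def by (rule weak_le_finite)
  have xU: "x \<in> U" using x by (simp add: U_def weak_le_refl)
  have inner: "(\<Sum>w\<in>{w. weak_le v w}. H w z) = (\<Sum>w\<in>U. if weak_le v w then H w z else 0)"
    if v: "v \<in> U" for v
  proof -
    have "{w. weak_le v w} = U \<inter> {w. weak_le v w}" using v weak_le_trans by (auto simp: U_def)
    then show ?thesis using sum.inter_restrict[OF fU, of "\<lambda>w. H w z" "{w. weak_le v w}"] by simp
  qed
  have "(\<Sum>v\<in>U. scal (of_int (mobius x v)) (\<Sum>w\<in>{w. weak_le v w}. H w)) z =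
      (\<Sum>v\<in>U. of_int (mobius x v) * (\<Sum>w\<in>{w. weak_le v w}. H w z))"
    by (simp add: sum_fun_app)
  also have "\<dots> = (\<Sum>v\<in>U. \<Sum>w\<in>U. if weak_le v w then of_int (mobius x v) * H w z else 0)"
    by (rule sum.cong[OF refl]) (simp add: inner sum_distrib_left if_distrib[of "\<lambda>t. _ * t"] cong: if_cong)
  also have "\<dots> = (\<Sum>w\<in>U. \<Sum>v\<in>U. if weak_le v w then of_int (mobius x v) * H w z else 0)"
    by (rule sum.swap)
  also have "\<dots> = (\<Sum>w\<in>U. (if x = w then 1 else 0) * H w z)"
  proof (rule sum.cong[OF refl])
    fix w assume w: "w \<in> U"
    have "(\<Sum>v\<in>U. if weak_le v w then of_int (mobius x v) * H w z else 0) =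
        (\<Sum>v\<in>U. if weak_le v w then of_int (mobius x v) else 0) * H w z"
      by (simp add: sum_distrib_right if_distrib[of "\<lambda>t. t * _"] cong: if_cong)
    also have "(\<Sum>v\<in>U. if weak_le v w then of_int (mobius x v) else (0::rat)) =
        (\<Sum>v\<in>{v. weak_le x v \<and> weak_le v w}. of_int (mobius x v))"
    proof -
      have "{v. weak_le x v \<and> weak_le v w} = U \<inter> {v. weak_le v w}" by (auto simp: U_def)
      then show ?thesis using sum.inter_restrict[OF fU, of "\<lambda>v. of_int (mobius x v) :: rat" "{v. weak_le v w}"]
        by simp
    qed
    also have "\<dots> = of_int (\<Sum>v\<in>{v. weak_le x v \<and> weak_le v w}. mobius x v)" by simp
    also have "\<dots> = (if x = w then 1 else 0)" using mobius_sum[of x w] w by (simp add: U_def)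
    finally show "(\<Sum>v\<in>U. if weak_le v w then of_int (mobius x v) * H w z else 0) =
        (if x = w then 1 else 0) * H w z" .
  qed
  also have "\<dots> = H x z" using fU xU by (simp add: if_distrib[of "\<lambda>t. t * _"] sum.delta cong: if_cong)
  finally show "(\<Sum>v\<in>{v. weak_le x v}. scal (of_int (mobius x v)) (\<Sum>w\<in>{w. weak_le v w}. H w)) z = H x z"
    by (simp add: U_def)
qed

section \<open>The monomial basis\<close>

lemma MM_apply: "MM u v = (if weak_le u v then of_int (mobius u v) else 0)"
  unfolding MM_def by (simp add: comb_FF_apply weak_le_finite)

lemma MM_self: "is_perm u \<Longrightarrow> MM u u = 1"
  by (simp add: MM_apply weak_le_refl mobius_refl)

lemma MM_nz: "MM u v \<noteq> 0 \<Longrightarrow> weak_le u v"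
  by (simp add: MM_apply split: if_splits)

lemma MM_SSym: "MM u \<in> SSym"
proof -
  have "fsupp (MM u) \<subseteq> {v. weak_le u v}" using MM_nz by (auto simp: fsupp_def)
  then show ?thesis using weak_le_finite by (auto simp: SSym_def weak_le_def intro: finite_subset)
qed

lemma linext_MM: "linext P (MM u) = (\<Sum>v\<in>{v. weak_le u v}. scal (of_int (mobius u v)) (P v))"
  unfolding MM_def by (rule linext_comb[OF weak_le_finite])

lemma FF_in_span: "is_perm u \<Longrightarrow> FF u \<in> lspan (MM ` {u. is_perm u})"
proof (induct "length u * length u - card (Inv u)" arbitrary: u rule: less_induct)
  case less
  define V where "V = {v. weak_le u v} - {u}"
  have fV: "finite V" unfolding V_def using weak_le_finite by simp
  have MMu: "MM u = FF u + (\<Sum>v\<in>V. scal (of_int (mobius u v)) (FF v))"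
  proof -
    have e: "{v. weak_le u v} = insert u V" using less.prems weak_le_refl by (auto simp: V_def)
    have n: "u \<notin> V" by (simp add: V_def)
    have "MM u = scal (of_int (mobius u u)) (FF u) + (\<Sum>v\<in>V. scal (of_int (mobius u v)) (FF v))"
      unfolding MM_def e sum.insert[OF fV n] ..
    moreover have "scal (of_int (mobius u u)) (FF u) = FF u"
      using less.prems by (simp add: mobius_refl scal_def)
    ultimately show ?thesis by simp
  qed
  have IH: "FF v \<in> lspan (MM ` {u. is_perm u})" if v: "v \<in> V" for v
  proof -
    have wl: "weak_lt u v" using v by (auto simp: V_def weak_lt_def)
    then have "card (Inv u) < card (Inv v)" by (rule weak_lt_card)
    moreover have "length v = length u" using wl by (auto simp: weak_lt_def weak_le_def)
    moreover have "card (Inv v) \<le> length u * length u"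
    proof -
      have "Inv v \<subseteq> {1..length v} \<times> {1..length v}" by (auto simp: Inv_def)
      then have "card (Inv v) \<le> card ({1..length v} \<times> {1..length v})" by (rule card_mono[rotated]) simp
      then show ?thesis using \<open>length v = length u\<close> by (simp add: card_cartesian_product)
    qed
    ultimately have "length u * length u - card (Inv v) < length u * length u - card (Inv u)" by linarith
    then have "length v * length v - card (Inv v) < length u * length u - card (Inv u)"
      using \<open>length v = length u\<close> by simp
    moreover have "is_perm v" using wl by (auto simp: weak_lt_def weak_le_def)
    ultimately show ?thesis using less.hyps by blast
  qed
  have "FF u = MM u + (\<Sum>v\<in>V. scal (- of_int (mobius u v)) (FF v))"
  proof (rule ext)
    fix z
    show "FF u z = (MM u + (\<Sum>v\<in>V. scal (- of_int (mobius u v)) (FF v))) z"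
      unfolding MMu plus_fun_apply sum_fun_app scal_apply by (simp add: sum_negf)
  qed
  moreover have "MM u \<in> lspan (MM ` {u. is_perm u})"
    by (rule subsetD[OF lspan_inc]) (use less.prems in simp)
  moreover have "(\<Sum>v\<in>V. scal (- of_int (mobius u v)) (FF v)) \<in> lspan (MM ` {u. is_perm u})"
    using IH by (intro lspan_comb) blast
  moreover have "\<forall>x\<in>lspan (MM ` {u. is_perm u}). \<forall>y\<in>lspan (MM ` {u. is_perm u}). x + y \<in> lspan (MM ` {u. is_perm u})"
    using subsp_lspan unfolding subsp_def by blast
  ultimately show ?case by simp
qed

lemma SSym_span: "SSym = lspan (MM ` {u. is_perm u})"
proof
  show "lspan (MM ` {u. is_perm u}) \<subseteq> SSym"
    by (rule lspan_least[OF subsp_SSym]) (use MM_SSym in blast)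
next
  show "SSym \<subseteq> lspan (MM ` {u. is_perm u})"
  proof
    fix f assume f: "f \<in> SSym"
    then have "f = (\<Sum>u\<in>fsupp f. scal (f u) (FF u))" using FS_expand SSym_FS by blast
    moreover have "\<forall>u\<in>fsupp f. FF u \<in> lspan (MM ` {u. is_perm u})"
      using f FF_in_span by (auto simp: SSym_def)
    ultimately show "f \<in> lspan (MM ` {u. is_perm u})" using lspan_comb by metis
  qed
qed

lemma FF_sum_MM:
  assumes u: "is_perm u"
  shows "FF u = (\<Sum>w\<in>{w. weak_le u w}. MM w)"
proof -
  define G where "G u = (\<Sum>w\<in>{w. weak_le u w}. MM w)" for u
  have "linext G x = x" if x: "x \<in> SSym" for x
  proof (rule lin_eq_on_lspan[OF subsp_FS lin_linext])
    show "lin FS (\<lambda>x. x)" by (simp add: lin_def)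
    show "MM ` {u. is_perm u} \<subseteq> FS" using MM_SSym SSym_FS by blast
    show "x \<in> lspan (MM ` {u. is_perm u})" using x SSym_span by simp
  next
    fix y assume "y \<in> MM ` {u. is_perm u}"
    then obtain v where v: "is_perm v" "y = MM v" by blast
    have "linext G (MM v) = MM v" unfolding linext_MM G_def by (rule mob_inv[OF v(1)])
    then show "linext G y = y" using v by simp
  qed
  moreover have "FF u \<in> SSym" using u by (simp add: SSym_def fsupp_FF)
  ultimately have "linext G (FF u) = FF u" by blast
  then show ?thesis by (simp add: linext_FF G_def)
qed




section \<open>Tensor powers\<close>

definition ctens :: "(nat list \<Rightarrow> rat) \<Rightarrow> (nat list list \<Rightarrow> rat) \<Rightarrow> (nat list list \<Rightarrow> rat)" where
  "ctens v t = (\<lambda>w. case w of [] \<Rightarrow> 0 | x # xs \<Rightarrow> v x * t xs)"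

lemma tpow_Nil: "tpow [] = (\<lambda>w. if w = [] then 1 else 0)"
  by (simp add: tpow_def fun_eq_iff)

lemma tpow_Cons: "tpow (v # vs) = ctens v (tpow vs)"
proof (rule ext)
  fix w show "tpow (v # vs) w = ctens v (tpow vs) w"
  proof (cases w)
    case Nil then show ?thesis by (simp add: tpow_def ctens_def)
  next
    case (Cons x xs)
    show ?thesis unfolding Cons tpow_def ctens_def length_Cons list.case
      by (simp only: prod.lessThan_Suc_shift) simp
  qed
qed

lemma tpow_at_Nil: "tpow vs [] = (if vs = [] then 1 else 0)"
  by (simp add: tpow_def)

lemma tpow_nz: "tpow vs w \<noteq> 0 \<Longrightarrow> length w = length vs"
  by (simp add: tpow_def split: if_splits)

lemma lin_ctens1: "lin UNIV (\<lambda>v. ctens v t)"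
  by (auto simp: lin_def ctens_def fun_eq_iff distrib_right mult.assoc split: list.splits)

lemma lin_ctens2: "lin UNIV (ctens v)"
  by (auto simp: lin_def ctens_def fun_eq_iff distrib_left mult.left_commute split: list.splits)

lemma subsp_UNIV: "subsp UNIV" by (simp add: subsp_def)

lemma tpow_span:
  "(\<forall>v\<in>set vs. v \<in> lspan G) \<Longrightarrow> tpow vs \<in> lspan {tpow gs | gs. length gs = length vs \<and> set gs \<subseteq> G}"
proof (induct vs)
  case Nil
  show ?case by (rule subsetD[OF lspan_inc]) auto
next
  case (Cons v vs)
  let ?H = "{tpow gs | gs. length gs = length vs \<and> set gs \<subseteq> G}"
  let ?C = "{tpow gs | gs. length gs = length (v # vs) \<and> set gs \<subseteq> G}"
  have t: "tpow vs \<in> lspan ?H" using Cons by simp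
  have v: "v \<in> lspan G" using Cons.prems by simp
  have step: "ctens g (tpow vs) \<in> lspan ?C" if g: "g \<in> G" for g
  proof -
    have "ctens g (tpow vs) \<in> ctens g ` lspan ?H" using t by blast
    also have "\<dots> = lspan (ctens g ` ?H)" by (rule lin_image_lspan[OF subsp_UNIV lin_ctens2]) simp
    also have "\<dots> \<subseteq> lspan ?C"
    proof (rule lspan_mono)
      show "ctens g ` ?H \<subseteq> ?C"
      proof
        fix y assume "y \<in> ctens g ` ?H"
        then obtain gs where gs: "length gs = length vs" "set gs \<subseteq> G" "y = ctens g (tpow gs)" by blast
        then have "y = tpow (g # gs)" by (simp add: tpow_Cons)
        moreover have "length (g # gs) = length (v # vs)" "set (g # gs) \<subseteq> G" using gs g by auto
        ultimately show "y \<in> ?C" by blast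
      qed
    qed
    finally show ?thesis .
  qed
  have "ctens v (tpow vs) \<in> (\<lambda>v. ctens v (tpow vs)) ` lspan G" using v by blast
  also have "\<dots> = lspan ((\<lambda>v. ctens v (tpow vs)) ` G)"
    by (rule lin_image_lspan[OF subsp_UNIV lin_ctens1]) simp
  also have "\<dots> \<subseteq> lspan ?C"
    by (rule lspan_least[OF subsp_lspan]) (use step in blast)
  finally show ?case by (simp add: tpow_Cons)
qed

lemma DeltaQ_tpow_pt:
  "tpow vs (x1 @ x2) = (\<Sum>j\<in>{0..length vs}. tpow (take j vs) x1 * tpow (drop j vs) x2)"
proof (induct x1 arbitrary: vs)
  case Nil
  have "(\<Sum>j\<in>{0..length vs}. tpow (take j vs) [] * tpow (drop j vs) x2) =
        (\<Sum>j\<in>{0..length vs}. if j = 0 then tpow vs x2 else 0)"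
    by (rule sum.cong[OF refl]) (auto simp: tpow_at_Nil)
  then show ?case by simp
next
  case (Cons a x1)
  show ?case
  proof (cases vs)
    case Nil then show ?thesis by (simp add: tpow_Nil)
  next
    case (Cons v vs')
    have "tpow vs ((a # x1) @ x2) = v a * tpow vs' (x1 @ x2)"
      using Cons by (simp add: tpow_Cons ctens_def)
    also have "\<dots> = v a * (\<Sum>j\<in>{0..length vs'}. tpow (take j vs') x1 * tpow (drop j vs') x2)"
      using Cons.hyps by simp
    also have "\<dots> = (\<Sum>j\<in>{0..length vs'}. tpow (take (Suc j) vs) (a # x1) * tpow (drop (Suc j) vs) x2)"
      using Cons by (simp add: sum_distrib_left tpow_Cons ctens_def mult.assoc)
    also have "\<dots> = (\<Sum>j\<in>{0..length vs}. tpow (take j vs) (a # x1) * tpow (drop j vs) x2)"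
    proof -
      have l: "length vs = Suc (length vs')" using Cons by simp
      have "(\<Sum>j\<in>{0..length vs}. tpow (take j vs) (a # x1) * tpow (drop j vs) x2) =
          tpow (take 0 vs) (a # x1) * tpow (drop 0 vs) x2 +
          (\<Sum>j\<in>{0..length vs'}. tpow (take (Suc j) vs) (a # x1) * tpow (drop (Suc j) vs) x2)"
        unfolding l sum.atLeast0_atMost_Suc_shift by (simp add: comp_def)
      moreover have "tpow (take 0 vs) (a # x1) = 0" by (simp add: tpow_def)
      ultimately show ?thesis by simp
    qed
    finally show ?thesis .
  qed
qed

lemma DeltaQ_tpow:
  "DeltaQ (tpow vs) = (\<Sum>j\<in>{0..length vs}. tensor (tpow (take j vs)) (tpow (drop j vs)))"
  by (rule ext) (auto simp: DeltaQ_def tensor_def sum_fun_app DeltaQ_tpow_pt)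

lemma DeltaQ_sum: "DeltaQ (\<Sum>i\<in>I. g i) = (\<Sum>i\<in>I. DeltaQ (g i))"
  by (rule ext) (auto simp: DeltaQ_def sum_fun_app)

lemma DeltaQ_scal: "DeltaQ (scal c g) = scal c (DeltaQ g)"
  by (rule ext) (auto simp: DeltaQ_def)

lemma tensor_sum: "tensor (\<Sum>i\<in>I. f i) (\<Sum>j\<in>J. g j) = (\<Sum>i\<in>I. \<Sum>j\<in>J. tensor (f i) (g j))"
  by (rule ext) (auto simp: tensor_def sum_fun_app sum_product)

definition dl :: "'a \<Rightarrow> ('a \<Rightarrow> rat)" where "dl a = (\<lambda>v. if v = a then 1 else 0)"

lemma FF_dl: "FF = dl" by (simp add: fun_eq_iff FF_def dl_def)

lemma tensor_FF: "tensor (FF a) (FF b) = dl (a, b)"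
  by (rule ext) (auto simp: tensor_def FF_def dl_def split: if_splits)

lemma fsupp_dl: "fsupp (dl a) = {a}" by (auto simp: fsupp_def dl_def)

lemma dl_FS: "dl a \<in> FS" by (simp add: FS_def fsupp_dl)

lemma linext_dl: "linext P (dl a) = P a"
  unfolding linext_def fsupp_dl by (simp add: dl_def scal_def)

definition TT :: "nat list \<Rightarrow> (nat list list \<Rightarrow> rat)" where
  "TT w = tpow (map MM (comps w))"

lemma TT_key: "is_perm w \<Longrightarrow> TT w (comps w) = 1"
  using comps_prop[of w] by (simp add: TT_def tpow_def MM_self irr_def)

lemma TT_nz:
  assumes "TT w x \<noteq> 0"
  shows "length x = length (comps w) \<and> (\<forall>i<length x. weak_le (comps w ! i) (x ! i))"
proof -
  have l: "length x = length (comps w)" using assms by (simp add: TT_def tpow_def split: if_splits)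
  have "(\<Prod>i<length (comps w). MM (comps w ! i) (x ! i)) \<noteq> 0" using assms l by (simp add: TT_def tpow_def)
  then have "\<forall>i<length x. MM (comps w ! i) (x ! i) \<noteq> 0" using l by simp
  then show ?thesis using l MM_nz by blast
qed

definition rk :: "nat list \<Rightarrow> nat" where
  "rk w = (\<Sum>i<length (comps w). card (Inv (comps w ! i)))"

lemma TT_indep:
  assumes W: "finite W" "W \<subseteq> {u. is_perm u}"
    and z: "(\<Sum>w\<in>W. scal (c w) (TT w)) = 0"
  shows "\<forall>w\<in>W. c w = 0"
proof (rule triangular_indep[OF W(1) _ _ z, where key = comps and rank = rk])
  fix i assume "i \<in> W" then show "TT i (comps i) \<noteq> 0" using W TT_key by auto
next
  fix i j assume ij: "i \<in> W" "j \<in> W" "i \<noteq> j" "TT i (comps j) \<noteq> 0"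
  have pi: "is_perm i" and pj: "is_perm j" using ij W by auto
  from TT_nz[OF ij(4)] have l: "length (comps j) = length (comps i)"
    and le: "\<forall>k<length (comps j). weak_le (comps i ! k) (comps j ! k)" by auto
  have "comps i \<noteq> comps j" using comps_prop[OF pi] comps_prop[OF pj] ij(3) by metis
  then obtain k where k: "k < length (comps j)" "comps i ! k \<noteq> comps j ! k"
    using l nth_equalityI by metis
  show "rk i < rk j" unfolding rk_def l[symmetric]
  proof (rule sum_strict_mono_ex1)
    show "finite {..<length (comps j)}" by simp
    show "\<forall>x\<in>{..<length (comps j)}. card (Inv (comps i ! x)) \<le> card (Inv (comps j ! x))"
      using le weak_le_card by auto
    have "weak_lt (comps i ! k) (comps j ! k)" using le k by (simp add: weak_lt_def)
    then show "\<exists>a\<in>{..<length (comps j)}. card (Inv (comps i ! a)) < card (Inv (comps j ! a))"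
      using k weak_lt_card by auto
  qed
qed

definition PF :: "nat list \<Rightarrow> (nat list list \<Rightarrow> rat)" where
  "PF u = (\<Sum>w\<in>{w. weak_le u w}. TT w)"

definition phiM :: "(nat list \<Rightarrow> rat) \<Rightarrow> (nat list list \<Rightarrow> rat)" where
  "phiM = linext PF"

lemma phiM_MM: "is_perm x \<Longrightarrow> phiM (MM x) = TT x"
  unfolding phiM_def linext_MM PF_def by (rule mob_inv)

lemma phiM_FF: "phiM (FF u) = PF u"
  by (simp add: phiM_def linext_FF)

lemma lin_phiM: "lin FS phiM"
  unfolding phiM_def by (rule lin_linext)

definition Rv :: "nat list \<Rightarrow> (nat list \<times> nat list) set" where
  "Rv v = {(a, b). is_perm a \<and> is_perm b \<and> weak_le v (over a b)}"

lemma perm_le_finite: "finite {u. is_perm u \<and> length u \<le> n}"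
proof -
  have "{u. is_perm u \<and> length u \<le> n} \<subseteq> {xs. set xs \<subseteq> {1..n} \<and> length xs \<le> n}"
    unfolding is_perm_def by auto
  moreover have "finite {xs. set xs \<subseteq> {1..n} \<and> length xs \<le> n}"
    by (rule finite_lists_length_le) simp
  ultimately show ?thesis by (rule finite_subset)
qed

lemma Rv_finite: "finite (Rv v)"
proof -
  have "Rv v \<subseteq> {u. is_perm u \<and> length u \<le> length v} \<times> {u. is_perm u \<and> length u \<le> length v}"
    by (auto simp: Rv_def dest!: weak_le_perm)
  then show ?thesis using perm_le_finite finite_subset by blast
qed

lemma R1:
  fixes f :: "nat list \<Rightarrow> nat list \<Rightarrow> 'c::comm_monoid_add"
  assumes v: "is_perm v"
  shows "(\<Sum>p\<in>{0..length v}. \<Sum>a\<in>{a. weak_le (st (take p v)) a}. \<Sum>b\<in>{b. weak_le (st (drop p v)) b}. f a b)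
       = (\<Sum>(a, b)\<in>Rv v. f a b)"
proof -
  define S where "S = Sigma {0..length v} (\<lambda>p. {a. weak_le (st (take p v)) a} \<times> {b. weak_le (st (drop p v)) b})"
  have "(\<Sum>p\<in>{0..length v}. \<Sum>a\<in>{a. weak_le (st (take p v)) a}. \<Sum>b\<in>{b. weak_le (st (drop p v)) b}. f a b)
      = (\<Sum>p\<in>{0..length v}. \<Sum>(a, b)\<in>{a. weak_le (st (take p v)) a} \<times> {b. weak_le (st (drop p v)) b}. f a b)"
    by (rule sum.cong[OF refl]) (rule sum.cartesian_product)
  also have "\<dots> = (\<Sum>(p, ab)\<in>S. (\<lambda>(a, b). f a b) ab)"
    unfolding S_def by (rule sum.Sigma) (auto intro: weak_le_finite)
  also have "\<dots> = (\<Sum>ab\<in>snd ` S. (\<lambda>(a, b). f a b) ab)"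
  proof -
    have "inj_on snd S"
    proof (rule inj_onI)
      fix x y assume "x \<in> S" "y \<in> S" "snd x = snd y"
      moreover have "fst z = length (fst (snd z))" if "z \<in> S" for z
        using that weak_le_perm by (fastforce simp: S_def)
      ultimately show "x = y" by (metis prod.collapse)
    qed
    then show ?thesis by (simp add: sum.reindex split_def)
  qed
  also have "snd ` S = Rv v"
  proof
    show "snd ` S \<subseteq> Rv v"
    proof
      fix ab assume "ab \<in> snd ` S"
      then obtain p a b where ab: "ab = (a, b)" "p \<le> length v" "weak_le (st (take p v)) a"
        "weak_le (st (drop p v)) b" by (auto simp: S_def)
      have "length a = p" "is_perm a" "is_perm b" "length b = length v - p"
        using ab weak_le_perm by fastforce+
      then show "ab \<in> Rv v" using weak_le_over[OF v, of a b] ab by (auto simp: Rv_def)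
    qed
  next
    show "Rv v \<subseteq> snd ` S"
    proof
      fix ab assume "ab \<in> Rv v"
      then obtain a b where ab: "ab = (a, b)" "is_perm a" "is_perm b" "weak_le v (over a b)"
        by (auto simp: Rv_def)
      have l: "length v = length a + length b" using ab(4) weak_le_perm by fastforce
      then have "(length a, a, b) \<in> S" using weak_le_over[OF v ab(2) ab(3) l] ab by (auto simp: S_def)
      then show "ab \<in> snd ` S" using ab by force
    qed
  qed
  finally show ?thesis by (simp add: split_def)
qed

lemma R2:
  fixes f :: "nat list \<Rightarrow> nat list \<Rightarrow> 'c::comm_monoid_add"
  assumes v: "is_perm v"
  shows "(\<Sum>w\<in>{w. weak_le v w}. \<Sum>j\<in>{0..length (comps w)}. f (prodo (take j (comps w))) (prodo (drop j (comps w))))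
       = (\<Sum>(a, b)\<in>Rv v. f a b)"
proof -
  define S where "S = Sigma {w. weak_le v w} (\<lambda>w. {0..length (comps w)})"
  define h where "h = (\<lambda>(w, j). (prodo (take j (comps w)), prodo (drop j (comps w))))"
  have "(\<Sum>w\<in>{w. weak_le v w}. \<Sum>j\<in>{0..length (comps w)}. f (prodo (take j (comps w))) (prodo (drop j (comps w))))
      = (\<Sum>wj\<in>S. (\<lambda>(a, b). f a b) (h wj))"
    unfolding S_def h_def by (subst sum.Sigma) (auto intro: weak_le_finite simp: split_def)
  also have "\<dots> = (\<Sum>ab\<in>h ` S. (\<lambda>(a, b). f a b) ab)"
  proof -
    have key: "over (fst (h (w, j))) (snd (h (w, j))) = w \<and> length (comps (fst (h (w, j)))) = j"
      if "(w, j) \<in> S" for w j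
    proof -
      have w: "is_perm w" "j \<le> length (comps w)" using that weak_le_perm by (auto simp: S_def)
      note cp = comps_prop[OF w(1)]
      have "over (fst (h (w, j))) (snd (h (w, j))) = prodo (take j (comps w) @ drop j (comps w))"
        by (simp add: h_def prodo_append del: append_take_drop_id)
      also have "\<dots> = w" using cp by simp
      moreover have "\<forall>c\<in>set (take j (comps w)). irr c" using cp by (auto dest: in_set_takeD)
      then have "comps (prodo (take j (comps w))) = take j (comps w)" by (rule comps_prodo)
      ultimately show ?thesis using w(2) by (simp add: h_def)
    qed
    have "inj_on h S"
    proof (rule inj_onI)
      fix x y assume xy: "x \<in> S" "y \<in> S" "h x = h y"
      obtain w j where x: "x = (w, j)" by (cases x)
      obtain w' j' where y: "y = (w', j')" by (cases y)
      show "x = y" using key[of w j] key[of w' j'] xy x y by metis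
    qed
    then show ?thesis by (simp add: sum.reindex)
  qed
  also have "h ` S = Rv v"
  proof
    show "h ` S \<subseteq> Rv v"
    proof
      fix ab assume "ab \<in> h ` S"
      then obtain w j where wj: "(w, j) \<in> S" "ab = h (w, j)" by auto
      have w: "is_perm w" "weak_le v w" using wj(1) weak_le_perm by (auto simp: S_def)
      note cp = comps_prop[OF w(1)]
      have "over (prodo (take j (comps w))) (prodo (drop j (comps w))) = w"
        using cp prodo_append[of "take j (comps w)" "drop j (comps w)"] by simp
      moreover have "is_perm (prodo (take j (comps w)))" "is_perm (prodo (drop j (comps w)))"
        using cp by (auto intro!: prodo_perm simp: irr_def dest: in_set_takeD in_set_dropD)
      ultimately show "ab \<in> Rv v" using wj w by (simp add: Rv_def h_def)
    qed
  next
    show "Rv v \<subseteq> h ` S"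
    proof
      fix ab assume "ab \<in> Rv v"
      then obtain a b where ab: "ab = (a, b)" "is_perm a" "is_perm b" "weak_le v (over a b)"
        by (auto simp: Rv_def)
      have c: "comps (over a b) = comps a @ comps b" using comps_over ab by simp
      have "h (over a b, length (comps a)) = (a, b)"
        using c comps_prop[OF ab(2)] comps_prop[OF ab(3)] by (simp add: h_def)
      moreover have "(over a b, length (comps a)) \<in> S" using ab c by (simp add: S_def)
      ultimately show "ab \<in> h ` S" using ab by force
    qed
  qed
  finally show ?thesis by (simp add: split_def)
qed




section \<open>Coalgebra compatibility\<close>

lemma DeltaF_dl: "DeltaF u = (\<Sum>p\<in>{0..length u}. dl (st (take p u), st (drop p u)))"
  by (simp add: DeltaF_def tensor_FF)

lemma DeltaF_FS: "DeltaF u \<in> FS"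
  unfolding DeltaF_dl by (rule subsp_sum[OF subsp_FS]) (simp add: dl_FS)

lemma st_take_perm: "is_perm u \<Longrightarrow> is_perm (st (take p u))"
  by (rule perm_st) (simp add: is_perm_def)

lemma st_drop_perm: "is_perm u \<Longrightarrow> is_perm (st (drop p u))"
  by (rule perm_st) (simp add: is_perm_def)

lemma TT_take_drop:
  assumes "\<forall>c\<in>set cs. irr c"
  shows "tpow (take j (map MM cs)) = TT (prodo (take j cs))"
    and "tpow (drop j (map MM cs)) = TT (prodo (drop j cs))"
proof -
  have "\<forall>c\<in>set (take j cs). irr c" "\<forall>c\<in>set (drop j cs). irr c"
    using assms by (auto dest: in_set_takeD in_set_dropD)
  then show "tpow (take j (map MM cs)) = TT (prodo (take j cs))"
    and "tpow (drop j (map MM cs)) = TT (prodo (drop j cs))"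
    by (simp_all add: TT_def comps_prodo take_map drop_map)
qed

lemma DeltaQ_TT:
  assumes w: "is_perm w"
  shows "DeltaQ (TT w) = (\<Sum>j\<in>{0..length (comps w)}. tensor (TT (prodo (take j (comps w)))) (TT (prodo (drop j (comps w)))))"
proof -
  have cp: "\<forall>c\<in>set (comps w). irr c" using comps_prop[OF w] by simp
  show ?thesis unfolding TT_def[of w] DeltaQ_tpow length_map TT_take_drop[OF cp] ..
qed

definition QQ :: "nat list \<times> nat list \<Rightarrow> (nat list list \<times> nat list list \<Rightarrow> rat)" where
  "QQ ab = tensor (PF (fst ab)) (PF (snd ab))"

lemma tensor_map_linext: "tensor_map phiM t = linext QQ t"
  unfolding tensor_map_def linext_def QQ_def
  by (rule sum.cong[OF refl]) (auto simp: phiM_FF)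

lemma compat_FF:
  assumes u: "is_perm u"
  shows "linext QQ (DeltaF u) = DeltaQ (PF u)"
proof -
  have "linext QQ (DeltaF u) = (\<Sum>p\<in>{0..length u}. QQ (st (take p u), st (drop p u)))"
    unfolding DeltaF_dl by (subst lin_sum[OF subsp_FS lin_linext]) (simp_all add: dl_FS linext_dl)
  also have "\<dots> = (\<Sum>p\<in>{0..length u}. \<Sum>a\<in>{a. weak_le (st (take p u)) a}. \<Sum>b\<in>{b. weak_le (st (drop p u)) b}.
      tensor (TT a) (TT b))"
    by (simp add: QQ_def PF_def tensor_sum)
  also have "\<dots> = (\<Sum>(a, b)\<in>Rv u. tensor (TT a) (TT b))" by (rule R1[OF u])
  also have "\<dots> = (\<Sum>w\<in>{w. weak_le u w}. \<Sum>j\<in>{0..length (comps w)}.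
      tensor (TT (prodo (take j (comps w)))) (TT (prodo (drop j (comps w)))))"
    by (rule R2[OF u, symmetric])
  also have "\<dots> = (\<Sum>w\<in>{w. weak_le u w}. DeltaQ (TT w))"
    by (rule sum.cong[OF refl]) (simp add: DeltaQ_TT weak_le_perm)
  also have "\<dots> = DeltaQ (PF u)" by (simp add: PF_def DeltaQ_sum)
  finally show ?thesis .
qed

lemma compat:
  assumes x: "x \<in> SSym"
  shows "tensor_map phiM (Delta x) = DeltaQ (phiM x)"
proof -
  have fs: "x \<in> FS" using x SSym_FS by blast
  have pu: "\<forall>u\<in>fsupp x. is_perm u" using x by (simp add: SSym_def)
  have "tensor_map phiM (Delta x) = linext QQ (\<Sum>u\<in>fsupp x. scal (x u) (DeltaF u))"
    by (simp add: tensor_map_linext Delta_linext linext_def)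
  also have "\<dots> = (\<Sum>u\<in>fsupp x. scal (x u) (linext QQ (DeltaF u)))"
    by (rule lin_comb[OF subsp_FS lin_linext]) (simp add: DeltaF_FS)
  also have "\<dots> = (\<Sum>u\<in>fsupp x. scal (x u) (DeltaQ (PF u)))"
    by (rule sum.cong[OF refl]) (simp add: compat_FF pu)
  also have "\<dots> = DeltaQ (\<Sum>u\<in>fsupp x. scal (x u) (PF u))"
    by (simp add: DeltaQ_sum DeltaQ_scal)
  also have "\<dots> = DeltaQ (phiM x)" by (simp add: phiM_def linext_def)
  finally show ?thesis .
qed

lemma counit_compat:
  assumes x: "x \<in> SSym"
  shows "counitQ (phiM x) = counit x"
proof -
  have pu: "\<forall>u\<in>fsupp x. is_perm u" using x by (simp add: SSym_def)
  have TT0: "TT w [] = (if w = [] then 1 else 0)" if "is_perm w" for w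
    using comps_prop[OF that] by (auto simp: TT_def tpow_at_Nil)
  have PF0: "PF u [] = (if u = [] then 1 else 0)" if u: "is_perm u" for u
  proof -
    have "PF u [] = (\<Sum>w\<in>{w. weak_le u w}. if w = [] then 1 else 0)"
      unfolding PF_def sum_fun_app by (rule sum.cong[OF refl]) (simp add: TT0 weak_le_perm)
    also have "\<dots> = (if [] \<in> {w. weak_le u w} then 1 else 0)"
      by (simp add: sum.delta' weak_le_finite)
    also have "([] \<in> {w. weak_le u w}) = (u = [])"
      using u weak_le_perm[of u "[]"] weak_le_refl[of u] by auto
    finally show ?thesis .
  qed
  have "counitQ (phiM x) = (\<Sum>u\<in>fsupp x. x u * PF u [])"
    by (simp add: counitQ_def phiM_def linext_def sum_fun_app)
  also have "\<dots> = (\<Sum>u\<in>fsupp x. if u = [] then x u else 0)"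
    by (rule sum.cong[OF refl]) (simp add: PF0 pu)
  also have "\<dots> = x []"
    using x by (simp add: sum.delta' SSym_def fsupp_def)
  finally show ?thesis by (simp add: counit_def)
qed

lemma DeltaF_MM:
  assumes v: "is_perm v"
  shows "DeltaF v = (\<Sum>(a, b)\<in>Rv v. tensor (MM a) (MM b))"
proof -
  have "DeltaF v = (\<Sum>p\<in>{0..length v}. tensor (\<Sum>a\<in>{a. weak_le (st (take p v)) a}. MM a)
       (\<Sum>b\<in>{b. weak_le (st (drop p v)) b}. MM b))"
    unfolding DeltaF_def
    by (rule sum.cong[OF refl]) (simp add: FF_sum_MM[symmetric] st_take_perm st_drop_perm v)
  also have "\<dots> = (\<Sum>p\<in>{0..length v}. \<Sum>a\<in>{a. weak_le (st (take p v)) a}. \<Sum>b\<in>{b. weak_le (st (drop p v)) b}.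
      tensor (MM a) (MM b))"
    by (simp add: tensor_sum)
  also have "\<dots> = (\<Sum>(a, b)\<in>Rv v. tensor (MM a) (MM b))" by (rule R1[OF v])
  finally show ?thesis .
qed

lemma Delta_MM:
  assumes u: "is_perm u"
  shows "Delta (MM u) = (\<Sum>ab\<in>{ab\<in>Rv u. over (fst ab) (snd ab) = u}. tensor (MM (fst ab)) (MM (snd ab)))"
proof (rule ext)
  fix z
  define U where "U = {v. weak_le u v}"
  define E where "E ab = tensor (MM (fst ab)) (MM (snd ab)) z" for ab
  have fU: "finite U" unfolding U_def by (rule weak_le_finite)
  have fR: "finite (Rv u)" by (rule Rv_finite)
  have inner: "(\<Sum>(a, b)\<in>Rv v. tensor (MM a) (MM b)) z = (\<Sum>ab\<in>Rv u. if weak_le v (over (fst ab) (snd ab)) then E ab else 0)"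
    if v: "v \<in> U" for v
  proof -
    have "Rv v = Rv u \<inter> {ab. weak_le v (over (fst ab) (snd ab))}"
      using v weak_le_trans by (auto simp: U_def Rv_def)
    then have "(\<Sum>ab\<in>Rv v. E ab) = (\<Sum>ab\<in>Rv u. if weak_le v (over (fst ab) (snd ab)) then E ab else 0)"
      using sum.inter_restrict[OF fR, of E "{ab. weak_le v (over (fst ab) (snd ab))}"] by simp
    then show ?thesis by (simp add: sum_fun_app E_def split_def)
  qed
  have "Delta (MM u) z = (\<Sum>v\<in>U. of_int (mobius u v) * (\<Sum>(a, b)\<in>Rv v. tensor (MM a) (MM b)) z)"
    unfolding Delta_linext linext_MM U_def sum_fun_app scal_apply
    by (rule sum.cong[OF refl]) (simp add: DeltaF_MM weak_le_perm sum_fun_app)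
  also have "\<dots> = (\<Sum>v\<in>U. \<Sum>ab\<in>Rv u. if weak_le v (over (fst ab) (snd ab)) then of_int (mobius u v) * E ab else 0)"
    by (rule sum.cong[OF refl]) (simp add: inner sum_distrib_left if_distrib[of "\<lambda>t. _ * t"] cong: if_cong)
  also have "\<dots> = (\<Sum>ab\<in>Rv u. \<Sum>v\<in>U. if weak_le v (over (fst ab) (snd ab)) then of_int (mobius u v) * E ab else 0)"
    by (rule sum.swap)
  also have "\<dots> = (\<Sum>ab\<in>Rv u. if over (fst ab) (snd ab) = u then E ab else 0)"
  proof (rule sum.cong[OF refl])
    fix ab assume ab: "ab \<in> Rv u"
    define w where "w = over (fst ab) (snd ab)"
    have uw: "weak_le u w" using ab by (auto simp: Rv_def w_def)
    have "(\<Sum>v\<in>U. if weak_le v w then of_int (mobius u v) * E ab else 0) =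
        (\<Sum>v\<in>U. if weak_le v w then of_int (mobius u v) else 0) * E ab"
      by (simp add: sum_distrib_right if_distrib[of "\<lambda>t. t * _"] cong: if_cong)
    also have "(\<Sum>v\<in>U. if weak_le v w then of_int (mobius u v) else (0::rat)) =
        (\<Sum>v\<in>{v. weak_le u v \<and> weak_le v w}. of_int (mobius u v))"
    proof -
      have "{v. weak_le u v \<and> weak_le v w} = U \<inter> {v. weak_le v w}" by (auto simp: U_def)
      then show ?thesis using sum.inter_restrict[OF fU, of "\<lambda>v. of_int (mobius u v) :: rat" "{v. weak_le v w}"]
        by simp
    qed
    also have "\<dots> = of_int (\<Sum>v\<in>{v. weak_le u v \<and> weak_le v w}. mobius u v)" by simp
    also have "\<dots> = (if u = w then 1 else 0)" using mobius_sum[OF uw] by simp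
    finally show "(\<Sum>v\<in>U. if weak_le v (over (fst ab) (snd ab)) then of_int (mobius u v) * E ab else 0) =
        (if over (fst ab) (snd ab) = u then E ab else 0)" by (auto simp: w_def)
  qed
  also have "\<dots> = (\<Sum>ab\<in>{ab\<in>Rv u. over (fst ab) (snd ab) = u}. E ab)"
    using sum.inter_filter[OF fR, of E "\<lambda>ab. over (fst ab) (snd ab) = u"] by simp
  finally show "Delta (MM u) z = (\<Sum>ab\<in>{ab\<in>Rv u. over (fst ab) (snd ab) = u}. tensor (MM (fst ab)) (MM (snd ab))) z"
    by (simp add: sum_fun_app E_def)
qed




section \<open>Gradings and images\<close>

lemma Sk_perm: "Sk k \<subseteq> {u. is_perm u}" by (auto simp: Sk_char)

lemma UN_Sk: "(\<Union>k. Sk k) = {u. is_perm u}"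
  by (auto simp: Sk_char)

lemma MM_FS: "MM ` A \<subseteq> FS" using MM_SSym SSym_FS by blast

lemma MM_in_FS: "MM u \<in> FS" using MM_SSym SSym_FS by blast

lemma SSymk_SSym: "SSymk k \<subseteq> SSym"
  unfolding SSymk_def by (rule lspan_least[OF subsp_SSym]) (use MM_SSym in blast)

lemma phiM_img: "A \<subseteq> {u. is_perm u} \<Longrightarrow> phiM ` lspan (MM ` A) = lspan (TT ` A)"
proof -
  assume A: "A \<subseteq> {u. is_perm u}"
  have "phiM ` lspan (MM ` A) = lspan (phiM ` MM ` A)"
    by (rule lin_image_lspan[OF subsp_FS lin_phiM MM_FS])
  moreover have "phiM ` MM ` A = TT ` A" unfolding image_image
    by (rule image_cong[OF refl]) (use A phiM_MM in blast)
  ultimately show ?thesis by simp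
qed

lemma gen_sub: "{tpow gs | gs. length gs = k \<and> set gs \<subseteq> MM ` Sk 1} \<subseteq> TT ` Sk k"
proof
  fix y assume "y \<in> {tpow gs | gs. length gs = k \<and> set gs \<subseteq> MM ` Sk 1}"
  then obtain gs where gs: "y = tpow gs" "length gs = k" "set gs \<subseteq> MM ` Sk 1" by blast
  define cs where "cs = map (inv_into (Sk 1) MM) gs"
  have mc: "map MM cs = gs" unfolding cs_def using gs(3)
    by (simp add: map_idI f_inv_into_f subset_iff)
  have sc: "\<forall>c\<in>set cs. irr c" unfolding cs_def using gs(3) irr_Sk1
    by (auto intro: inv_into_into)
  define w where "w = prodo cs"
  have cw: "comps w = cs" unfolding w_def by (rule comps_prodo[OF sc])
  have pw: "is_perm w" unfolding w_def by (rule prodo_perm) (use sc in \<open>auto simp: irr_def\<close>)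
  have "w \<in> Sk k" using pw cw gs(2) mc by (auto simp: Sk_char)
  moreover have "y = TT w" using gs(1) cw mc by (simp add: TT_def)
  ultimately show "y \<in> TT ` Sk k" by blast
qed

lemma Vpow_eq: "Vpow (SSymk 1) k = lspan (TT ` Sk k)"
proof
  show "Vpow (SSymk 1) k \<subseteq> lspan (TT ` Sk k)"
    unfolding Vpow_def
  proof (rule lspan_least[OF subsp_lspan], rule subsetI)
    fix y assume "y \<in> {tpow vs |vs. length vs = k \<and> set vs \<subseteq> SSymk 1}"
    then obtain vs where vs: "y = tpow vs" "length vs = k" "set vs \<subseteq> SSymk 1" by blast
    have "tpow vs \<in> lspan {tpow gs | gs. length gs = length vs \<and> set gs \<subseteq> MM ` Sk 1}"
      by (rule tpow_span) (use vs(3) in \<open>auto simp: SSymk_def\<close>)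
    also have "\<dots> \<subseteq> lspan (TT ` Sk k)" by (rule lspan_mono) (use gen_sub vs(2) in simp)
    finally show "y \<in> lspan (TT ` Sk k)" using vs(1) by simp
  qed
next
  show "lspan (TT ` Sk k) \<subseteq> Vpow (SSymk 1) k"
    unfolding Vpow_def
  proof (rule lspan_mono, rule subsetI)
    fix y assume "y \<in> TT ` Sk k"
    then obtain w where w: "w \<in> Sk k" "y = TT w" by blast
    have pw: "is_perm w" "length (comps w) = k" using w by (auto simp: Sk_char)
    have "set (map MM (comps w)) \<subseteq> SSymk 1"
    proof
      fix g assume "g \<in> set (map MM (comps w))"
      then obtain c where c: "c \<in> set (comps w)" "g = MM c" by auto
      then have "c \<in> Sk 1" using comps_prop[OF pw(1)] irr_Sk1 by blast
      then show "g \<in> SSymk 1" unfolding SSymk_def c(2) by (rule subsetD[OF lspan_inc, OF imageI])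
    qed
    moreover have "y = tpow (map MM (comps w))" "length (map MM (comps w)) = k"
      using w pw by (auto simp: TT_def)
    ultimately show "y \<in> {tpow vs |vs. length vs = k \<and> set vs \<subseteq> SSymk 1}" by blast
  qed
qed

lemma phiM_SSymk: "phiM ` SSymk k = Vpow (SSymk 1) k"
  unfolding Vpow_eq unfolding SSymk_def by (rule phiM_img[OF Sk_perm])

lemma QV_eq: "QV (SSymk 1) = lspan (TT ` {u. is_perm u})"
proof -
  have "QV (SSymk 1) = lspan (\<Union>k. lspan (TT ` Sk k))" unfolding QV_def Vpow_eq ..
  also have "\<dots> = lspan (\<Union>k. TT ` Sk k)" by (rule lspan_UN)
  also have "(\<Union>k. TT ` Sk k) = TT ` {u. is_perm u}" unfolding UN_Sk[symmetric] by blast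
  finally show ?thesis .
qed

lemma phiM_SSym: "phiM ` SSym = QV (SSymk 1)"
  unfolding QV_eq SSym_span by (rule phiM_img) simp

lemma phiM_zero:
  assumes x: "x \<in> SSym" and z: "phiM x = 0"
  shows "x = 0"
proof -
  have "x \<in> lspan (MM ` {u. is_perm u})" using x SSym_span by simp
  from lspan_image_form[OF this] obtain W c where
    W0: "finite W \<and> W \<subseteq> {u. is_perm u} \<and> x = (\<Sum>w\<in>W. scal (c w) (MM w))"
    by (elim exE)
  then have W: "finite W" "W \<subseteq> {u. is_perm u}" "x = (\<Sum>w\<in>W. scal (c w) (MM w))" by simp_all
  have "phiM x = (\<Sum>w\<in>W. scal (c w) (phiM (MM w)))"
    unfolding W(3) by (rule lin_comb[OF subsp_FS lin_phiM]) (simp add: MM_in_FS)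
  also have "\<dots> = (\<Sum>w\<in>W. scal (c w) (TT w))"
    by (rule sum.cong[OF refl]) (use W(2) in \<open>auto simp: phiM_MM\<close>)
  finally have "(\<Sum>w\<in>W. scal (c w) (TT w)) = 0" using z by simp
  then have "\<forall>w\<in>W. c w = 0" by (rule TT_indep[OF W(1) W(2)])
  then show "x = 0" unfolding W(3) by (simp add: fun_eq_iff sum_fun_app)
qed

lemma phiM_inj: "inj_on phiM SSym"
proof (rule inj_onI)
  fix x y assume xy: "x \<in> SSym" "y \<in> SSym" "phiM x = phiM y"
  have d: "x + scal (-1) y \<in> SSym" using xy subsp_SSym unfolding subsp_def by blast
  have "phiM (x + scal (-1) y) = phiM x + scal (-1) (phiM y)"
    using lin_phiM xy SSym_FS subsp_FS unfolding lin_def subsp_def by (metis subsetD)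
  also have "\<dots> = 0" using xy(3) by (simp add: fun_eq_iff)
  finally have "x + scal (-1) y = 0" using phiM_zero d by blast
  then show "x = y" by (simp add: fun_eq_iff)
qed

lemma Vpow_supp: "g \<in> Vpow V k \<Longrightarrow> length w \<noteq> k \<Longrightarrow> g w = 0"
proof -
  assume g: "g \<in> Vpow V k" and w: "length w \<noteq> k"
  have "subsp {g. \<forall>w. length w \<noteq> k \<longrightarrow> g w = 0}" by (simp add: subsp_def)
  moreover have "{tpow vs |vs. length vs = k \<and> set vs \<subseteq> V} \<subseteq> {g. \<forall>w. length w \<noteq> k \<longrightarrow> g w = 0}"
    using tpow_nz by fastforce
  ultimately have "Vpow V k \<subseteq> {g. \<forall>w. length w \<noteq> k \<longrightarrow> g w = 0}"
    unfolding Vpow_def by (rule lspan_least)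
  then show "g w = 0" using g w by blast
qed

lemma direct_sum:
  assumes K: "finite K" and xk: "\<forall>k\<in>K. x k \<in> SSymk k" and s: "(\<Sum>k\<in>K. x k) = 0"
  shows "\<forall>k\<in>K. x k = 0"
proof
  fix k0 assume k0: "k0 \<in> K"
  have xs: "\<forall>k\<in>K. x k \<in> SSym" using xk SSymk_SSym by blast
  have "(\<Sum>k\<in>K. phiM (x k)) = phiM (\<Sum>k\<in>K. x k)"
    by (rule lin_sum[OF subsp_FS lin_phiM, symmetric]) (use xs SSym_FS in blast)
  also have "\<dots> = 0" using s lin_zero[OF subsp_FS lin_phiM] by simp
  finally have s2: "(\<Sum>k\<in>K. phiM (x k)) = 0" .
  have vk: "phiM (x k) \<in> Vpow (SSymk 1) k" if "k \<in> K" for k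
    using xk that phiM_SSymk by blast
  have "phiM (x k0) = 0"
  proof (rule ext)
    fix w
    show "phiM (x k0) w = 0 w"
    proof (cases "length w = k0")
      case True
      have "0 = (\<Sum>k\<in>K. phiM (x k)) w" using s2 by simp
      also have "\<dots> = (\<Sum>k\<in>K. phiM (x k) w)" by (rule sum_fun_app)
      also have "\<dots> = (\<Sum>k\<in>K. if k = k0 then phiM (x k0) w else 0)"
      proof (rule sum.cong[OF refl])
        fix k assume k: "k \<in> K"
        show "phiM (x k) w = (if k = k0 then phiM (x k0) w else 0)"
        proof (cases "k = k0")
          case False
          then have "length w \<noteq> k" using True by simp
          then show ?thesis using Vpow_supp[OF vk[OF k]] False by simp
        qed simp
      qed
      also have "\<dots> = phiM (x k0) w" using K k0 by (simp add: sum.delta')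
      finally show ?thesis by simp
    next
      case False
      then show ?thesis using vk[OF k0] Vpow_supp by simp
    qed
  qed
  then show "x k0 = 0" using phiM_zero xs k0 by blast
qed

lemma part3:
  assumes x: "x \<in> SSymk k"
  shows "Delta x \<in> lspan (\<Union>i\<in>{0..k}. tensor_sp (SSymk i) (SSymk (k - i)))"
proof -
  let ?L = "lspan (\<Union>i\<in>{0..k}. tensor_sp (SSymk i) (SSymk (k - i)))"
  have gen: "Delta (MM u) \<in> ?L" if u: "u \<in> Sk k" for u
  proof -
    have pu: "is_perm u" "length (comps u) = k" using u by (auto simp: Sk_char)
    have "Delta (MM u) = (\<Sum>ab\<in>{ab\<in>Rv u. over (fst ab) (snd ab) = u}. tensor (MM (fst ab)) (MM (snd ab)))"
      by (rule Delta_MM[OF pu(1)])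
    also have "\<dots> \<in> ?L"
    proof (rule lspan_sum, rule ballI)
      fix ab assume ab: "ab \<in> {ab\<in>Rv u. over (fst ab) (snd ab) = u}"
      obtain a b where abd: "ab = (a, b)" by (cases ab)
      have pa: "is_perm a" "is_perm b" "over a b = u" using ab abd by (auto simp: Rv_def)
      define i where "i = length (comps a)"
      have ci: "length (comps b) = k - i" "i \<le> k"
        using comps_over[OF pa(1) pa(2)] pa(3) pu(2) by (auto simp: i_def)
      have ma: "MM a \<in> SSymk i" unfolding SSymk_def
        by (rule subsetD[OF lspan_inc, OF imageI]) (simp add: Sk_char pa i_def)
      have mb: "MM b \<in> SSymk (k - i)" unfolding SSymk_def
        by (rule subsetD[OF lspan_inc, OF imageI]) (simp add: Sk_char pa ci)
      have "tensor (MM a) (MM b) \<in> tensor_sp (SSymk i) (SSymk (k - i))"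
        unfolding tensor_sp_def by (rule subsetD[OF lspan_inc]) (use ma mb in blast)
      then have "tensor (MM a) (MM b) \<in> (\<Union>i\<in>{0..k}. tensor_sp (SSymk i) (SSymk (k - i)))"
        using ci(2) by auto
      then show "tensor (MM (fst ab)) (MM (snd ab)) \<in> ?L"
        using abd by (simp add: subsetD[OF lspan_inc])
    qed
    finally show ?thesis .
  qed
  have "Delta ` SSymk k = lspan (Delta ` MM ` Sk k)"
    unfolding SSymk_def Delta_linext by (rule lin_image_lspan[OF subsp_FS lin_linext MM_FS])
  also have "\<dots> \<subseteq> ?L" by (rule lspan_least[OF subsp_lspan]) (use gen in blast)
  finally show ?thesis using x by blast
qed

theorem mainTheorem10:
  shows
    "SSym = lspan (\<Union>k. SSymk k)
     \<and> (\<forall>K x. finite K \<longrightarrow> (\<forall>k\<in>K. x k \<in> SSymk k) \<longrightarrow> (\<Sum>k\<in>K. x k) = 0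
           \<longrightarrow> (\<forall>k\<in>K. x k = 0))
     \<and> (\<forall>k. \<forall>x\<in>SSymk k. Delta x \<in> lspan (\<Union>i\<in>{0..k}. tensor_sp (SSymk i) (SSymk (k - i))))
     \<and> (\<exists>phi. (\<forall>x\<in>SSym. \<forall>y\<in>SSym. phi (x + y) = phi x + phi y)
            \<and> (\<forall>c. \<forall>x\<in>SSym. phi (scal c x) = scal c (phi x))
            \<and> bij_betw phi SSym (QV (SSymk 1))
            \<and> (\<forall>k. phi ` SSymk k = Vpow (SSymk 1) k)
            \<and> (\<forall>x\<in>SSym. tensor_map phi (Delta x) = DeltaQ (phi x))
            \<and> (\<forall>x\<in>SSym. counitQ (phi x) = counit x))"
proof (intro conjI)
  have "lspan (\<Union>k. SSymk k) = lspan (\<Union>k. MM ` Sk k)" unfolding SSymk_def by (rule lspan_UN)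
  also have "(\<Union>k. MM ` Sk k) = MM ` {u. is_perm u}" unfolding UN_Sk[symmetric] by blast
  finally show "SSym = lspan (\<Union>k. SSymk k)" using SSym_span by simp
next
  show "\<forall>K x. finite K \<longrightarrow> (\<forall>k\<in>K. x k \<in> SSymk k) \<longrightarrow> (\<Sum>k\<in>K. x k) = 0 \<longrightarrow> (\<forall>k\<in>K. x k = 0)"
    using direct_sum by blast
next
  show "\<forall>k. \<forall>x\<in>SSymk k. Delta x \<in> lspan (\<Union>i\<in>{0..k}. tensor_sp (SSymk i) (SSymk (k - i)))"
    using part3 by blast
next
  have l1: "\<forall>x\<in>SSym. \<forall>y\<in>SSym. phiM (x + y) = phiM x + phiM y"
    using lin_phiM SSym_FS unfolding lin_def by blast
  have l2: "\<forall>c. \<forall>x\<in>SSym. phiM (scal c x) = scal c (phiM x)"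
    using lin_phiM SSym_FS unfolding lin_def by blast
  have b: "bij_betw phiM SSym (QV (SSymk 1))"
    unfolding bij_betw_def using phiM_inj phiM_SSym by blast
  show "\<exists>phi. (\<forall>x\<in>SSym. \<forall>y\<in>SSym. phi (x + y) = phi x + phi y)
            \<and> (\<forall>c. \<forall>x\<in>SSym. phi (scal c x) = scal c (phi x))
            \<and> bij_betw phi SSym (QV (SSymk 1))
            \<and> (\<forall>k. phi ` SSymk k = Vpow (SSymk 1) k)
            \<and> (\<forall>x\<in>SSym. tensor_map phi (Delta x) = DeltaQ (phi x))
            \<and> (\<forall>x\<in>SSym. counitQ (phi x) = counit x)"
    using l1 l2 b phiM_SSymk compat counit_compat by blast
qed



end
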